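(* Let $A$ be a $k$-algebra with a $k$-linear automorphism $\theta$ and a $k$-linear left $\theta$-derivation $\delta$, and let $A^\theta$ be the subalgebra of $\theta$-fixed elements. Assume there is a positive integer $d$ such that $\theta^d=\mathrm{id}_A$ and $\sum_{w\in W_i^d}w_{\theta,\delta}=0$ for all $0\le i<d$, and assume $A$ is finite over the subring $A^\theta\cap\ker\delta$ (finitely generated as both a left and a right module). Then the finite dual of the Ore extension $A[t;\theta,\delta]$ is isomorphic as a coalgebra to a cotwisted tensor product \[A[t;\theta,\delta]^\circ\cong A^\circ\otimes^\phi\mathrm{Dist}(\mathbb A^1_k)\] for a suitable cotwisting map $\phi$.
   Context: $k$ is a field. A left $\theta$-derivation is a linear map with $\delta(ab)=\theta(a)\delta(b)+\delta(a)b$. The Ore extension $A[t;\theta,\delta]$ is the algebra that is free as a left $A$-module with basis $\{t^n\}_{n\ge0}$ and multiplication determined by $ta=\theta(a)t+\delta(a)$ for $a\in A$. In the free monoid on two letters $u,v$, $W_i^m$ is the set of words of length $m$ containing exactly $i$ occurrences of $u$; for a word $w$, $w_{\theta,\delta}\in\mathrm{End}_k(A)$ is obtained by substituting $u\mapsto\theta$, $v\mapsto\delta$ and composing. For an algebra $R$, $R^\circ$ is the finite dual coalgebra: functionals $\phi\in R^*$ whose kernel contains a two-sided ideal of finite codimension, with comultiplication induced by the dual of multiplication and counit $\phi\mapsto\phi(1)$. $\mathrm{Dist}(\mathbb A^1_k)$ is the coalgebra of distributions on the affine line, $\varinjlim_S\Gamma(S,\mathcal O_S)^*$ over closed subschemes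 $S$ of $\mathbb A^1_k$ finite over $k$; it is isomorphic to $k[t]^\circ$. For coalgebras $C,D$, a linear map $\phi\colon C\otimes D\to D\otimes C$ is a cotwisting map if $\Delta_\phi=(\mathrm{id}_C\otimes\phi\otimes\mathrm{id}_D)\circ(\Delta_C\otimes\Delta_D)$ is coassociative on $C\otimes D$ with counit $\varepsilon_C\otimes\varepsilon_D$; $C\otimes^\phi D$ denotes the resulting coalgebra. *)

theory Defs
  imports "HOL-Computational_Algebra.Polynomial"
begin

text \<open>A (unital) k-algebra structure on a ring 'a: a ring homomorphism
  iota from the field 'k into the centre of 'a.  Scalar multiplication is
  c . a = iota c * a.\<close>
definition k_algebra :: "('k::field \<Rightarrow> 'a::ring_1) \<Rightarrow> bool" where
  "k_algebra \<iota> \<longleftrightarrow> \<iota> 1 = 1 \<and> (\<forall>x y. \<iota> (x + y) = \<iota> x + \<iota> y)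
     \<and> (\<forall>x y. \<iota> (x * y) = \<iota> x * \<iota> y) \<and> (\<forall>c a. \<iota> c * a = a * \<iota> c)"

definition k_linear :: "('k::field \<Rightarrow> 'a::ring_1) \<Rightarrow> ('a \<Rightarrow> 'a) \<Rightarrow> bool" where
  "k_linear \<iota> f \<longleftrightarrow> (\<forall>a b. f (a + b) = f a + f b) \<and> (\<forall>c a. f (\<iota> c * a) = \<iota> c * f a)"

text \<open>Words in u (True) and v (False) of length m with exactly i occurrences of u,
  and the substitution u := theta, v := delta followed by composition.\<close>
definition words :: "nat \<Rightarrow> nat \<Rightarrow> bool list set" where
  "words i m = {w. length w = m \<and> length (filter id w) = i}"

definition word_op :: "('a \<Rightarrow> 'a) \<Rightarrow> ('a \<Rightarrow> 'a) \<Rightarrow> bool list \<Rightarrow> 'a \<Rightarrow> 'a" where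
  "word_op \<theta> \<delta> w = foldr (\<lambda>b f. (if b then \<theta> else \<delta>) \<circ> f) w id"

definition fin_gen_left :: "'a::ring_1 set \<Rightarrow> bool" where
  "fin_gen_left B \<longleftrightarrow> (\<exists>S. finite S \<and> (\<forall>a. \<exists>b. (\<forall>s\<in>S. b s \<in> B) \<and> a = (\<Sum>s\<in>S. b s * s)))"

definition fin_gen_right :: "'a::ring_1 set \<Rightarrow> bool" where
  "fin_gen_right B \<longleftrightarrow> (\<exists>S. finite S \<and> (\<forall>a. \<exists>b. (\<forall>s\<in>S. b s \<in> B) \<and> a = (\<Sum>s\<in>S. s * b s)))"

text \<open>Elements are represented by their (left) coefficient polynomials
  sum a_i t^i.  Left multiplication by t: t (sum a_i t^i) = sum (theta a_i t^(i+1) + delta a_i t^i).\<close>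
definition tmul :: "('a::ring_1 \<Rightarrow> 'a) \<Rightarrow> ('a \<Rightarrow> 'a) \<Rightarrow> 'a poly \<Rightarrow> 'a poly" where
  "tmul \<theta> \<delta> p = pCons 0 (map_poly \<theta> p) + map_poly \<delta> p"

text \<open>(sum a_i t^i)(sum b_j t^j) = sum a_i (t^i b_j) t^j.\<close>
definition ore_mult :: "('a::ring_1 \<Rightarrow> 'a) \<Rightarrow> ('a \<Rightarrow> 'a) \<Rightarrow> 'a poly \<Rightarrow> 'a poly \<Rightarrow> 'a poly" where
  "ore_mult \<theta> \<delta> p q = (\<Sum>i\<le>degree p. \<Sum>j\<le>degree q.
      map_poly ((*) (coeff p i)) ((pCons 0 ^^ j) ((tmul \<theta> \<delta> ^^ i) [:coeff q j:])))"

definition ore_scal :: "('k \<Rightarrow> 'a::ring_1) \<Rightarrow> 'k \<Rightarrow> 'a poly \<Rightarrow> 'a poly" where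
  "ore_scal \<iota> c p = map_poly (\<lambda>x. \<iota> c * x) p"

definition alg_ideal :: "('r::ab_group_add \<Rightarrow> 'r \<Rightarrow> 'r) \<Rightarrow> ('k \<Rightarrow> 'r \<Rightarrow> 'r) \<Rightarrow> 'r set \<Rightarrow> bool" where
  "alg_ideal mul scal I \<longleftrightarrow> 0 \<in> I \<and> (\<forall>x\<in>I. \<forall>y\<in>I. x + y \<in> I) \<and> (\<forall>x\<in>I. - x \<in> I)
     \<and> (\<forall>x\<in>I. \<forall>c. scal c x \<in> I) \<and> (\<forall>x\<in>I. \<forall>r. mul r x \<in> I \<and> mul x r \<in> I)"

definition fin_codim :: "('k \<Rightarrow> 'r::ab_group_add \<Rightarrow> 'r) \<Rightarrow> 'r set \<Rightarrow> bool" where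
  "fin_codim scal I \<longleftrightarrow> (\<exists>F. finite F \<and> (\<forall>x. \<exists>c. x - (\<Sum>f\<in>F. scal (c f) f) \<in> I))"

definition finite_dual :: "('r::ab_group_add \<Rightarrow> 'r \<Rightarrow> 'r) \<Rightarrow> ('k::field \<Rightarrow> 'r \<Rightarrow> 'r) \<Rightarrow> ('r \<Rightarrow> 'k) set" where
  "finite_dual mul scal = {\<psi>. (\<forall>x y. \<psi> (x + y) = \<psi> x + \<psi> y) \<and> (\<forall>c x. \<psi> (scal c x) = c * \<psi> x)
      \<and> (\<exists>I. alg_ideal mul scal I \<and> fin_codim scal I \<and> (\<forall>x\<in>I. \<psi> x = 0))}"

text \<open>For subspaces C of functions X -> k and D of functions Y -> k, the tensor
  product C (x) D is (canonically and injectively) realised as the span of the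
  functions (x,y) |-> c x * d y inside the functions X x Y -> k.\<close>
definition tensor_span :: "('x \<Rightarrow> 'k::field) set \<Rightarrow> ('y \<Rightarrow> 'k) set \<Rightarrow> ('x \<times> 'y \<Rightarrow> 'k) set" where
  "tensor_span C D = {T. \<exists>(n::nat) c d. (\<forall>i<n. c i \<in> C \<and> d i \<in> D) \<and> T = (\<lambda>(x, y). \<Sum>i<n. c i x * d i y)}"

definition linear_on :: "('x \<Rightarrow> 'k::field) set \<Rightarrow> (('x \<Rightarrow> 'k) \<Rightarrow> ('y \<Rightarrow> 'k)) \<Rightarrow> bool" where
  "linear_on V f \<longleftrightarrow> (\<forall>u\<in>V. \<forall>v\<in>V. f (\<lambda>z. u z + v z) = (\<lambda>z. f u z + f v z))
     \<and> (\<forall>u\<in>V. \<forall>c. f (\<lambda>z. c * u z) = (\<lambda>z. c * f u z))"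

definition tensor_map :: "(('r \<Rightarrow> 'k) \<Rightarrow> ('u \<Rightarrow> 'k)) \<Rightarrow> (('s \<Rightarrow> 'k) \<Rightarrow> ('v \<Rightarrow> 'k))
     \<Rightarrow> ('r \<times> 's \<Rightarrow> 'k::field) \<Rightarrow> ('u \<times> 'v \<Rightarrow> 'k)" where
  "tensor_map f g G = (\<lambda>(u, v). f (\<lambda>x. g (\<lambda>y. G (x, y)) v) u)"

text \<open>C = R_1 finite dual, D = R_2 finite dual, with comultiplications
  Delta c (x,y) = c (x y).  Then
  Delta_phi = (id (x) phi (x) id) o (Delta_C (x) Delta_D) is given by
  Delta_phi T ((a,q),(a',p')) = phi ((x,y) |-> T (a x, y p')) (q, a').\<close>
definition delta_phi :: "('x \<Rightarrow> 'x \<Rightarrow> 'x) \<Rightarrow> ('y \<Rightarrow> 'y \<Rightarrow> 'y)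
     \<Rightarrow> (('x \<times> 'y \<Rightarrow> 'k) \<Rightarrow> ('y \<times> 'x \<Rightarrow> 'k)) \<Rightarrow> ('x \<times> 'y \<Rightarrow> 'k) \<Rightarrow> (('x \<times> 'y) \<times> ('x \<times> 'y) \<Rightarrow> 'k)" where
  "delta_phi mX mY \<phi> T = (\<lambda>((a, q), (a', p')). \<phi> (\<lambda>(x, y). T (mX a x, mY y p')) (q, a'))"

definition cotwisting :: "('x \<Rightarrow> 'k::field) set \<Rightarrow> ('y \<Rightarrow> 'k) set \<Rightarrow> ('x \<Rightarrow> 'x \<Rightarrow> 'x) \<Rightarrow> 'x
     \<Rightarrow> ('y \<Rightarrow> 'y \<Rightarrow> 'y) \<Rightarrow> 'y \<Rightarrow> (('x \<times> 'y \<Rightarrow> 'k) \<Rightarrow> ('y \<times> 'x \<Rightarrow> 'k)) \<Rightarrow> bool" where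
  "cotwisting C D mX oX mY oY \<phi> \<longleftrightarrow>
     linear_on (tensor_span C D) \<phi> \<and> \<phi> ` tensor_span C D \<subseteq> tensor_span D C \<and>
     (\<forall>T\<in>tensor_span C D.
        delta_phi mX mY \<phi> T \<in> tensor_span (tensor_span C D) (tensor_span C D)
      \<and> (\<forall>u v w. delta_phi mX mY \<phi> (\<lambda>z. delta_phi mX mY \<phi> T (z, w)) (u, v)
               = delta_phi mX mY \<phi> (\<lambda>z. delta_phi mX mY \<phi> T (u, z)) (v, w))
      \<and> (\<forall>w. delta_phi mX mY \<phi> T ((oX, oY), w) = T w)
      \<and> (\<forall>u. delta_phi mX mY \<phi> T (u, (oX, oY)) = T u))"

definition coalg_iso_twisted :: "('r \<Rightarrow> 'k::field) set \<Rightarrow> ('r \<Rightarrow> 'r \<Rightarrow> 'r) \<Rightarrow> 'r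
     \<Rightarrow> ('x \<Rightarrow> 'k) set \<Rightarrow> ('y \<Rightarrow> 'k) set \<Rightarrow> ('x \<Rightarrow> 'x \<Rightarrow> 'x) \<Rightarrow> 'x
     \<Rightarrow> ('y \<Rightarrow> 'y \<Rightarrow> 'y) \<Rightarrow> 'y \<Rightarrow> (('x \<times> 'y \<Rightarrow> 'k) \<Rightarrow> ('y \<times> 'x \<Rightarrow> 'k))
     \<Rightarrow> (('r \<Rightarrow> 'k) \<Rightarrow> ('x \<times> 'y \<Rightarrow> 'k)) \<Rightarrow> bool" where
  "coalg_iso_twisted R mR oR C D mX oX mY oY \<phi> f \<longleftrightarrow>
     bij_betw f R (tensor_span C D) \<and> linear_on R f
   \<and> (\<forall>\<psi>\<in>R. f \<psi> (oX, oY) = \<psi> oR)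
   \<and> (\<forall>\<psi>\<in>R. delta_phi mX mY \<phi> (f \<psi>) = tensor_map f f (\<lambda>(x, y). \<psi> (mR x y)))"

end

theory Submission
  imports Defs
begin



locale kspace =
  fixes scal :: "'k::field \<Rightarrow> 'r::ab_group_add \<Rightarrow> 'r"
  assumes sc_add_r: "scal c (x + y) = scal c x + scal c y"
    and sc_add_l: "scal (a + b) x = scal a x + scal b x"
    and sc_mult: "scal a (scal b x) = scal (a * b) x"
    and sc_one: "scal 1 x = x"
begin

lemma sc_zero_l[simp]: "scal 0 x = 0"
  using sc_add_l[of 0 0 x] by simp

lemma sc_zero_r[simp]: "scal c 0 = 0"
  using sc_add_r[of c 0 0] by simp

lemma sc_neg_r: "scal c (- x) = - scal c x"
  using sc_add_r[of c x "-x"] by (metis minus_unique add.right_inverse sc_zero_r)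

lemma sc_neg_l: "scal (- c) x = - scal c x"
  using sc_add_l[of c "-c" x] by (metis minus_unique add.right_inverse sc_zero_l)

lemma sc_diff_r: "scal c (x - y) = scal c x - scal c y"
  using sc_add_r[of c x "-y"] sc_neg_r by simp

lemma sc_diff_l: "scal (a - b) x = scal a x - scal b x"
  using sc_add_l[of a "-b" x] sc_neg_l by simp

lemma sc_sum_r: "scal c (\<Sum>i\<in>A. g i) = (\<Sum>i\<in>A. scal c (g i))"
  by (induction A rule: infinite_finite_induct) (auto simp: sc_add_r)

lemma sc_sum_l: "scal (\<Sum>i\<in>A. g i) x = (\<Sum>i\<in>A. scal (g i) x)"
  by (induction A rule: infinite_finite_induct) (auto simp: sc_add_l)

definition subsp :: "'r set \<Rightarrow> bool" where
  "subsp V \<longleftrightarrow> 0 \<in> V \<and> (\<forall>x\<in>V. \<forall>y\<in>V. x + y \<in> V) \<and> (\<forall>x\<in>V. \<forall>c. scal c x \<in> V)"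

definition lin :: "('r \<Rightarrow> 'k) \<Rightarrow> bool" where
  "lin l \<longleftrightarrow> (\<forall>x y. l (x + y) = l x + l y) \<and> (\<forall>c x. l (scal c x) = c * l x)"

definition spans :: "'r set \<Rightarrow> 'r set \<Rightarrow> bool" where
  "spans I F \<longleftrightarrow> (\<forall>x. \<exists>c. x - (\<Sum>f\<in>F. scal (c f) f) \<in> I)"

lemma subsp_0: "subsp V \<Longrightarrow> 0 \<in> V" by (simp add: subsp_def)
lemma subsp_add: "subsp V \<Longrightarrow> x \<in> V \<Longrightarrow> y \<in> V \<Longrightarrow> x + y \<in> V" by (simp add: subsp_def)
lemma subsp_scal: "subsp V \<Longrightarrow> x \<in> V \<Longrightarrow> scal c x \<in> V" by (simp add: subsp_def)
lemma subsp_neg: "subsp V \<Longrightarrow> x \<in> V \<Longrightarrow> - x \<in> V"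
  using subsp_scal[of V x "-1"] sc_neg_l[of 1 x] by (simp add: sc_one)
lemma subsp_diff: "subsp V \<Longrightarrow> x \<in> V \<Longrightarrow> y \<in> V \<Longrightarrow> x - y \<in> V"
  using subsp_add[of V x "-y"] subsp_neg[of V y] by simp
lemma subsp_sum: "subsp V \<Longrightarrow> (\<And>i. i \<in> A \<Longrightarrow> g i \<in> V) \<Longrightarrow> (\<Sum>i\<in>A. g i) \<in> V"
  by (induction A rule: infinite_finite_induct) (auto simp: subsp_0 subsp_add)

lemma lin_0: "lin l \<Longrightarrow> l 0 = 0"
  unfolding lin_def by (metis add_cancel_right_right add_0)
lemma lin_add: "lin l \<Longrightarrow> l (x + y) = l x + l y" unfolding lin_def by blast
lemma lin_scal: "lin l \<Longrightarrow> l (scal c x) = c * l x" unfolding lin_def by blast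
lemma lin_neg: "lin l \<Longrightarrow> l (- x) = - l x"
  using lin_add[of l x "-x"] lin_0[of l] by (metis minus_unique add.right_inverse)
lemma lin_diff: "lin l \<Longrightarrow> l (x - y) = l x - l y"
  using lin_add[of l x "-y"] lin_neg[of l y] by simp
lemma lin_sum: "lin l \<Longrightarrow> l (\<Sum>i\<in>A. g i) = (\<Sum>i\<in>A. l (g i))"
  by (induction A rule: infinite_finite_induct) (auto simp: lin_0 lin_add)

lemma sum_insert_coef:
  assumes "finite H"
  shows "\<exists>c'. (\<Sum>h\<in>insert y H. scal (c' h) h) = (\<Sum>h\<in>H. scal (c h) h) + scal l y"
proof (cases "y \<in> H")
  case True
  let ?c = "c(y := c y + l)"
  have "(\<Sum>h\<in>insert y H. scal (?c h) h) = scal (?c y) y + (\<Sum>h\<in>H-{y}. scal (?c h) h)"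
    using True assms by (simp add: insert_absorb sum.remove)
  also have "(\<Sum>h\<in>H-{y}. scal (?c h) h) = (\<Sum>h\<in>H-{y}. scal (c h) h)"
    by (rule sum.cong) auto
  also have "scal (?c y) y = scal (c y) y + scal l y" by (simp add: sc_add_l)
  finally have "(\<Sum>h\<in>insert y H. scal (?c h) h) = (scal (c y) y + (\<Sum>h\<in>H-{y}. scal (c h) h)) + scal l y"
    by (simp add: algebra_simps)
  also have "scal (c y) y + (\<Sum>h\<in>H-{y}. scal (c h) h) = (\<Sum>h\<in>H. scal (c h) h)"
    using True assms by (simp add: sum.remove)
  finally show ?thesis by blast
next
  case False
  let ?c = "c(y := l)"
  have "(\<Sum>h\<in>insert y H. scal (?c h) h) = scal l y + (\<Sum>h\<in>H. scal (?c h) h)"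
    using False assms by simp
  also have "(\<Sum>h\<in>H. scal (?c h) h) = (\<Sum>h\<in>H. scal (c h) h)"
    using False by (intro sum.cong) auto
  finally show ?thesis by (metis add.commute)
qed

lemma kernel_fin:
  assumes V: "subsp V" and G: "finite G" and L: "\<forall>g\<in>G. lin (\<alpha> g)"
  shows "\<exists>H. finite H \<and> H \<subseteq> V \<and> (\<forall>x\<in>V. \<exists>c. x - (\<Sum>h\<in>H. scal (c h) h) \<in> {y\<in>V. \<forall>g\<in>G. \<alpha> g y = 0})"
  using G L
proof (induction G rule: finite_induct)
  case empty
  show ?case by (intro exI[of _ "{}"]) simp
next
  case (insert g G)
  then obtain H where H: "finite H" "H \<subseteq> V"
    and sp: "\<forall>x\<in>V. \<exists>c. x - (\<Sum>h\<in>H. scal (c h) h) \<in> {y\<in>V. \<forall>g\<in>G. \<alpha> g y = 0}" by auto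
  have lg: "lin (\<alpha> g)" using insert by auto
  show ?case
  proof (cases "\<exists>k0\<in>V. (\<forall>g'\<in>G. \<alpha> g' k0 = 0) \<and> \<alpha> g k0 \<noteq> 0")
    case False
    show ?thesis
    proof (intro exI[of _ H] conjI ballI H)
      fix x assume x: "x \<in> V"
      then obtain c where c: "x - (\<Sum>h\<in>H. scal (c h) h) \<in> {y\<in>V. \<forall>g\<in>G. \<alpha> g y = 0}" using sp by blast
      then have "\<alpha> g (x - (\<Sum>h\<in>H. scal (c h) h)) = 0" using False by blast
      with c show "\<exists>c. x - (\<Sum>h\<in>H. scal (c h) h) \<in> {y\<in>V. \<forall>g\<in>insert g G. \<alpha> g y = 0}" by auto
    qed
  next
    case True
    then obtain k0 where k0: "k0 \<in> V" "\<forall>g'\<in>G. \<alpha> g' k0 = 0" "\<alpha> g k0 \<noteq> 0" by blast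
    show ?thesis
    proof (intro exI[of _ "insert k0 H"] conjI ballI)
      show "finite (insert k0 H)" "insert k0 H \<subseteq> V" using H k0 by auto
      fix x assume x: "x \<in> V"
      then obtain c where c: "x - (\<Sum>h\<in>H. scal (c h) h) \<in> {y\<in>V. \<forall>g\<in>G. \<alpha> g y = 0}" using sp by blast
      define k where "k = x - (\<Sum>h\<in>H. scal (c h) h)"
      define l where "l = \<alpha> g k / \<alpha> g k0"
      obtain c' where c': "(\<Sum>h\<in>insert k0 H. scal (c' h) h) = (\<Sum>h\<in>H. scal (c h) h) + scal l k0"
        using sum_insert_coef[OF H(1)] by blast
      have eq: "x - (\<Sum>h\<in>insert k0 H. scal (c' h) h) = k - scal l k0"
        unfolding c' k_def by (simp add: algebra_simps)
      have kV: "k \<in> V" "\<forall>g'\<in>G. \<alpha> g' k = 0" using c k_def by auto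
      have "k - scal l k0 \<in> V" using kV k0 V by (simp add: subsp_diff subsp_scal)
      moreover have "\<forall>g'\<in>G. \<alpha> g' (k - scal l k0) = 0"
        using kV k0 insert.prems by (simp add: lin_diff lin_scal)
      moreover have "\<alpha> g (k - scal l k0) = 0"
        using k0 lg by (simp add: lin_diff lin_scal l_def)
      ultimately have "x - (\<Sum>h\<in>insert k0 H. scal (c' h) h) \<in> {y\<in>V. \<forall>g\<in>insert g G. \<alpha> g y = 0}"
        unfolding eq by auto
      then show "\<exists>c. x - (\<Sum>h\<in>insert k0 H. scal (c h) h) \<in> {y\<in>V. \<forall>g\<in>insert g G. \<alpha> g y = 0}"
        by blast
    qed
  qed
qed

lemma sum_sc_add: "(\<Sum>g\<in>G. scal (a g + b g) g) = (\<Sum>g\<in>G. scal (a g) g) + (\<Sum>g\<in>G. scal (b g) g)"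
  by (simp add: sc_add_l sum.distrib)

lemma sum_sc_diff: "(\<Sum>g\<in>G. scal (a g - b g) g) = (\<Sum>g\<in>G. scal (a g) g) - (\<Sum>g\<in>G. scal (b g) g)"
  by (simp add: sc_diff_l sum_subtractf)

lemma sum_sc_mult: "(\<Sum>g\<in>G. scal (l * b g) g) = scal l (\<Sum>g\<in>G. scal (b g) g)"
  by (simp add: sc_sum_r sc_mult)

lemma coords:
  assumes I: "subsp I" and F: "finite F" and sp: "spans I F"
  shows "\<exists>G \<alpha>. finite G \<and> (\<forall>g\<in>G. lin (\<alpha> g)) \<and> (\<forall>x. x - (\<Sum>g\<in>G. scal (\<alpha> g x) g) \<in> I)
            \<and> (\<forall>x. x \<in> I \<longleftrightarrow> (\<forall>g\<in>G. \<alpha> g x = 0))"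
proof -
  have "\<exists>G. (G \<subseteq> F \<and> spans I G) \<and> (\<forall>G'. G' \<subseteq> F \<and> spans I G' \<longrightarrow> card G \<le> card G')"
    by (rule ex_has_least_nat[of "\<lambda>G. G \<subseteq> F \<and> spans I G" F card]) (use sp in simp)
  then obtain G where G: "G \<subseteq> F \<and> spans I G" and min: "\<And>G'. G' \<subseteq> F \<and> spans I G' \<Longrightarrow> card G \<le> card G'"
    by blast
  have finG: "finite G" using G F finite_subset by blast
  have indep: "\<forall>g\<in>G. c g = 0" if c: "(\<Sum>g\<in>G. scal (c g) g) \<in> I" for c
  proof (rule ccontr)
    assume "\<not> (\<forall>g\<in>G. c g = 0)"
    then obtain g0 where g0: "g0 \<in> G" "c g0 \<noteq> 0" by blast
    have "spans I (G - {g0})"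
      unfolding spans_def
    proof
      fix x
      obtain e where e: "x - (\<Sum>g\<in>G. scal (e g) g) \<in> I" using G unfolding spans_def by blast
      define l where "l = e g0 / c g0"
      define e' where "e' g = e g - l * c g" for g
      have e'0: "e' g0 = 0" using g0 by (simp add: e'_def l_def)
      have "(\<Sum>g\<in>G - {g0}. scal (e' g) g) = (\<Sum>g\<in>G. scal (e' g) g)"
        using finG g0 e'0 by (simp add: sum.remove)
      also have "\<dots> = (\<Sum>g\<in>G. scal (e g) g) - scal l (\<Sum>g\<in>G. scal (c g) g)"
        unfolding e'_def sum_sc_diff sum_sc_mult ..
      finally have "x - (\<Sum>g\<in>G - {g0}. scal (e' g) g) = (x - (\<Sum>g\<in>G. scal (e g) g)) + scal l (\<Sum>g\<in>G. scal (c g) g)"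
        by (simp add: algebra_simps)
      also have "\<dots> \<in> I" using e c I by (simp add: subsp_add subsp_scal)
      finally show "\<exists>c. x - (\<Sum>g\<in>G - {g0}. scal (c g) g) \<in> I" by blast
    qed
    then have "card G \<le> card (G - {g0})" using min G by blast
    moreover have "card (G - {g0}) < card G" using finG g0 by (metis card_Diff1_less)
    ultimately show False by simp
  qed
  have uniq: "\<forall>g\<in>G. c g = c' g" if "x - (\<Sum>g\<in>G. scal (c g) g) \<in> I" "x - (\<Sum>g\<in>G. scal (c' g) g) \<in> I" for x c c'
  proof -
    have "(x - (\<Sum>g\<in>G. scal (c' g) g)) - (x - (\<Sum>g\<in>G. scal (c g) g)) \<in> I"
      by (rule subsp_diff[OF I that(2) that(1)])
    also have "(x - (\<Sum>g\<in>G. scal (c' g) g)) - (x - (\<Sum>g\<in>G. scal (c g) g)) = (\<Sum>g\<in>G. scal (c g - c' g) g)"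
      by (simp add: sum_sc_diff)
    finally have "\<forall>g\<in>G. c g - c' g = 0" by (rule indep)
    then show ?thesis by simp
  qed
  define co where "co x = (SOME c. x - (\<Sum>g\<in>G. scal (c g) g) \<in> I)" for x
  have co: "x - (\<Sum>g\<in>G. scal (co x g) g) \<in> I" for x
  proof -
    have "\<exists>c. x - (\<Sum>g\<in>G. scal (c g) g) \<in> I" using G unfolding spans_def by blast
    then show ?thesis unfolding co_def by (rule someI_ex)
  qed
  have lin: "lin (\<lambda>x. co x g)" if g: "g \<in> G" for g
    unfolding lin_def
  proof (intro conjI allI)
    fix x y
    have "(x + y) - (\<Sum>g\<in>G. scal (co x g + co y g) g) = (x - (\<Sum>g\<in>G. scal (co x g) g)) + (y - (\<Sum>g\<in>G. scal (co y g) g))"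
      by (simp add: sum_sc_add algebra_simps)
    also have "\<dots> \<in> I" using co I by (simp add: subsp_add)
    finally show "co (x + y) g = co x g + co y g" using uniq[OF co[of "x+y"]] g by simp
  next
    fix a x
    have "scal a x - (\<Sum>g\<in>G. scal (a * co x g) g) = scal a (x - (\<Sum>g\<in>G. scal (co x g) g))"
      by (simp add: sum_sc_mult sc_diff_r)
    also have "\<dots> \<in> I" using co I by (simp add: subsp_scal)
    finally show "co (scal a x) g = a * co x g" using uniq[OF co[of "scal a x"]] g by simp
  qed
  have ker: "x \<in> I \<longleftrightarrow> (\<forall>g\<in>G. co x g = 0)" for x
  proof
    assume "x \<in> I"
    then have "x - (\<Sum>g\<in>G. scal ((\<lambda>_. 0) g) g) \<in> I" by simp
    from uniq[OF co[of x] this] show "\<forall>g\<in>G. co x g = 0" by simp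
  next
    assume "\<forall>g\<in>G. co x g = 0"
    then have "(\<Sum>g\<in>G. scal (co x g) g) = 0" by simp
    then show "x \<in> I" using co[of x] by simp
  qed
  show ?thesis
    apply (rule exI[of _ G], rule exI[of _ "\<lambda>g x. co x g"])
    using finG lin co ker by blast
qed


end



context kspace begin

lemma fin_codim_iff: "fin_codim scal I \<longleftrightarrow> (\<exists>F. finite F \<and> spans I F)"
  unfolding fin_codim_def spans_def by blast

lemma alg_ideal_subsp: "alg_ideal m scal I \<Longrightarrow> subsp I"
  unfolding alg_ideal_def subsp_def by blast

lemma fd_iff: "\<psi> \<in> finite_dual m scal \<longleftrightarrow> lin \<psi> \<and> (\<exists>I. alg_ideal m scal I \<and> fin_codim scal I \<and> (\<forall>x\<in>I. \<psi> x = 0))"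
  unfolding finite_dual_def lin_def by blast

lemma fd_intro: "lin \<psi> \<Longrightarrow> alg_ideal m scal I \<Longrightarrow> fin_codim scal I \<Longrightarrow> \<forall>x\<in>I. \<psi> x = 0 \<Longrightarrow> \<psi> \<in> finite_dual m scal"
  by (auto simp: fd_iff)

lemma kernel_fin_codim:
  assumes G: "finite G" and L: "\<forall>g\<in>G. lin (\<alpha> g)"
  shows "fin_codim scal {y. \<forall>g\<in>G. \<alpha> g y = 0}"
proof -
  have V: "subsp UNIV" unfolding subsp_def by simp
  from kernel_fin[OF V G L] obtain H where "finite H"
    "\<forall>x. \<exists>c. x - (\<Sum>h\<in>H. scal (c h) h) \<in> {y. \<forall>g\<in>G. \<alpha> g y = 0}" by auto
  then show ?thesis unfolding fin_codim_def by blast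
qed

lemma fin_codim_family:
  assumes "finite S" and "\<forall>x. \<exists>c. x - (\<Sum>i\<in>S. scal (c i) (v i)) \<in> I"
  shows "fin_codim scal I"
  unfolding fin_codim_def
proof (intro exI[of _ "v ` S"] conjI allI)
  show "finite (v ` S)" using assms by simp
  fix x
  obtain c where c: "x - (\<Sum>i\<in>S. scal (c i) (v i)) \<in> I" using assms by blast
  have "(\<Sum>i\<in>S. scal (c i) (v i)) = (\<Sum>y\<in>v ` S. \<Sum>i\<in>{i\<in>S. v i = y}. scal (c i) (v i))"
    by (rule sum.image_gen[OF assms(1)])
  also have "\<dots> = (\<Sum>y\<in>v ` S. scal (\<Sum>i\<in>{i\<in>S. v i = y}. c i) y)"
  proof (rule sum.cong[OF refl])
    fix y
    have "(\<Sum>i\<in>{i\<in>S. v i = y}. scal (c i) (v i)) = (\<Sum>i\<in>{i\<in>S. v i = y}. scal (c i) y)"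
      by (rule sum.cong) auto
    then show "(\<Sum>i\<in>{i\<in>S. v i = y}. scal (c i) (v i)) = scal (\<Sum>i\<in>{i\<in>S. v i = y}. c i) y"
      by (simp only: sc_sum_l)
  qed
  finally have "x - (\<Sum>f\<in>v ` S. scal ((\<lambda>y. \<Sum>i\<in>{i\<in>S. v i = y}. c i) f) f) \<in> I" using c by simp
  then show "\<exists>c. x - (\<Sum>f\<in>v ` S. scal (c f) f) \<in> I"
    by (intro exI[of _ "\<lambda>y. \<Sum>i\<in>{i\<in>S. v i = y}. c i"]) simp
qed

end

locale kalg = kspace scal for scal :: "'k::field \<Rightarrow> 'r::ab_group_add \<Rightarrow> 'r" +
  fixes mul :: "'r \<Rightarrow> 'r \<Rightarrow> 'r"
  assumes mul_add_l: "mul (x + y) z = mul x z + mul y z"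
    and mul_add_r: "mul x (y + z) = mul x y + mul x z"
    and mul_scal_l: "mul (scal c x) y = scal c (mul x y)"
    and mul_scal_r: "mul x (scal c y) = scal c (mul x y)"
begin

lemma mul_0_l[simp]: "mul 0 y = 0" using mul_add_l[of 0 0 y] by simp
lemma mul_0_r[simp]: "mul x 0 = 0" using mul_add_r[of x 0 0] by simp
lemma mul_diff_l: "mul (x - y) z = mul x z - mul y z"
  by (metis add_diff_cancel diff_add_cancel mul_add_l)
lemma mul_diff_r: "mul z (x - y) = mul z x - mul z y"
  by (metis add_diff_cancel diff_add_cancel mul_add_r)
lemma mul_sum_l: "mul (\<Sum>i\<in>A. g i) z = (\<Sum>i\<in>A. mul (g i) z)"
  by (induction A rule: infinite_finite_induct) (auto simp: mul_add_l)
lemma mul_sum_r: "mul z (\<Sum>i\<in>A. g i) = (\<Sum>i\<in>A. mul z (g i))"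
  by (induction A rule: infinite_finite_induct) (auto simp: mul_add_r)

abbreviation "FD \<equiv> finite_dual mul scal"

lemma ideal_mem: "alg_ideal mul scal I \<Longrightarrow> x \<in> I \<Longrightarrow> mul r x \<in> I \<and> mul x r \<in> I"
  unfolding alg_ideal_def by blast

lemma fd_lin: "\<psi> \<in> FD \<Longrightarrow> lin \<psi>" by (simp add: fd_iff)

lemma fd_coords:
  assumes "\<psi> \<in> FD"
  obtains I G \<alpha> where "alg_ideal mul scal I" "\<forall>x\<in>I. \<psi> x = 0" "finite G" "\<forall>g\<in>G. lin (\<alpha> g)"
    "\<forall>x. x - (\<Sum>g\<in>G. scal (\<alpha> g x) g) \<in> I" "\<forall>x. x \<in> I \<longleftrightarrow> (\<forall>g\<in>G. \<alpha> g x = 0)"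
proof -
  obtain I where I: "alg_ideal mul scal I" "fin_codim scal I" "\<forall>x\<in>I. \<psi> x = 0"
    using assms by (auto simp: fd_iff)
  then obtain F where "finite F" "spans I F" by (auto simp: fin_codim_iff)
  from coords[OF alg_ideal_subsp[OF I(1)] this] that I show ?thesis by blast
qed


lemma fd_zero: "(\<lambda>x. 0) \<in> FD"
proof (rule fd_intro[where I=UNIV])
  show "lin (\<lambda>x. 0)" by (simp add: lin_def)
  show "alg_ideal mul scal UNIV" by (simp add: alg_ideal_def)
  show "fin_codim scal UNIV" unfolding fin_codim_def by (intro exI[of _ "{}"]) simp
qed simp

lemma fd_scal: "\<psi> \<in> FD \<Longrightarrow> (\<lambda>x. c * \<psi> x) \<in> FD"
  unfolding fd_iff lin_def by (auto simp: algebra_simps)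

lemma fd_add:
  assumes "\<psi>1 \<in> FD" "\<psi>2 \<in> FD"
  shows "(\<lambda>x. \<psi>1 x + \<psi>2 x) \<in> FD"
proof -
  obtain I1 G1 \<alpha>1 where A: "alg_ideal mul scal I1" "\<forall>x\<in>I1. \<psi>1 x = 0" "finite G1" "\<forall>g\<in>G1. lin (\<alpha>1 g)"
    "\<forall>x. x - (\<Sum>g\<in>G1. scal (\<alpha>1 g x) g) \<in> I1" "\<forall>x. x \<in> I1 \<longleftrightarrow> (\<forall>g\<in>G1. \<alpha>1 g x = 0)"
    by (rule fd_coords[OF assms(1)])
  obtain I2 G2 \<alpha>2 where B: "alg_ideal mul scal I2" "\<forall>x\<in>I2. \<psi>2 x = 0" "finite G2" "\<forall>g\<in>G2. lin (\<alpha>2 g)"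
    "\<forall>x. x - (\<Sum>g\<in>G2. scal (\<alpha>2 g x) g) \<in> I2" "\<forall>x. x \<in> I2 \<longleftrightarrow> (\<forall>g\<in>G2. \<alpha>2 g x = 0)"
    by (rule fd_coords[OF assms(2)])
  define \<beta> where "\<beta> = case_sum \<alpha>1 \<alpha>2"
  have fin: "finite (Inl ` G1 \<union> Inr ` G2)" using A B by simp
  have lin: "\<forall>g\<in>Inl ` G1 \<union> Inr ` G2. lin (\<beta> g)" using A B by (auto simp: \<beta>_def)
  have bl: "(\<forall>g\<in>Inl ` G1 \<union> Inr ` G2. \<beta> g y = 0) \<longleftrightarrow> (\<forall>g\<in>G1. \<beta> (Inl g) y = 0) \<and> (\<forall>g\<in>G2. \<beta> (Inr g) y = 0)" for y
    by blast
  have eq: "I1 \<inter> I2 = {y. \<forall>g\<in>Inl ` G1 \<union> Inr ` G2. \<beta> g y = 0}"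
    unfolding bl using A(6) B(6) by (auto simp: \<beta>_def)
  show ?thesis
  proof (rule fd_intro[where I="I1 \<inter> I2"])
    show "lin (\<lambda>x. \<psi>1 x + \<psi>2 x)" using fd_lin[OF assms(1)] fd_lin[OF assms(2)]
      unfolding lin_def by (auto simp: algebra_simps)
    show "alg_ideal mul scal (I1 \<inter> I2)" using A(1) B(1) unfolding alg_ideal_def by blast
    show "fin_codim scal (I1 \<inter> I2)" unfolding eq by (rule kernel_fin_codim[OF fin lin])
    show "\<forall>x\<in>I1 \<inter> I2. \<psi>1 x + \<psi>2 x = 0" using A(2) B(2) by simp
  qed
qed

lemma fd_sum: "(\<And>i. i \<in> S \<Longrightarrow> \<psi> i \<in> FD) \<Longrightarrow> (\<lambda>x. \<Sum>i\<in>S. \<psi> i x) \<in> FD"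
proof (induction S rule: infinite_finite_induct)
  case (infinite A) then show ?case using fd_zero by simp
next
  case empty then show ?case using fd_zero by simp
next
  case (insert a A)
  then show ?case using fd_add[of "\<psi> a" "\<lambda>x. \<Sum>i\<in>A. \<psi> i x"] by simp
qed

lemma fd_translate:
  assumes "\<psi> \<in> FD"
  shows "(\<lambda>x. \<psi> (mul (mul a x) b)) \<in> FD"
proof -
  obtain I where I: "alg_ideal mul scal I" "fin_codim scal I" "\<forall>x\<in>I. \<psi> x = 0"
    using assms by (auto simp: fd_iff)
  have l: "lin \<psi>" using assms fd_lin by blast
  show ?thesis
  proof (rule fd_intro[OF _ I(1,2)])
    show "lin (\<lambda>x. \<psi> (mul (mul a x) b))" using l unfolding lin_def
      by (simp add: mul_add_l mul_add_r mul_scal_l mul_scal_r)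
    show "\<forall>x\<in>I. \<psi> (mul (mul a x) b) = 0" using I ideal_mem by blast
  qed
qed

lemma reindex_nat:
  assumes "finite S"
  shows "\<exists>(n::nat) e. bij_betw e {..<n} S"
proof -
  obtain h where "bij_betw h {0..<card S} S" using ex_bij_betw_nat_finite[OF assms] by blast
  moreover have "{..<card S} = {0..<card S}" by auto
  ultimately show ?thesis by metis
qed

lemma fd_finrank:
  assumes "\<psi> \<in> FD"
  shows "\<exists>(n::nat) u v. (\<forall>i<n. u i \<in> FD \<and> v i \<in> FD) \<and> (\<forall>x y. \<psi> (mul x y) = (\<Sum>i<n. u i x * v i y))"
proof -
  obtain I G \<alpha> where A: "alg_ideal mul scal I" "\<forall>x\<in>I. \<psi> x = 0" "finite G" "\<forall>g\<in>G. lin (\<alpha> g)"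
    "\<forall>x. x - (\<Sum>g\<in>G. scal (\<alpha> g x) g) \<in> I" "\<forall>x. x \<in> I \<longleftrightarrow> (\<forall>g\<in>G. \<alpha> g x = 0)"
    by (rule fd_coords[OF assms])
  have l: "lin \<psi>" using assms fd_lin by blast
  have fcI: "fin_codim scal I" unfolding fin_codim_def
  proof (intro exI[of _ G] conjI allI)
    fix x show "\<exists>c. x - (\<Sum>f\<in>G. scal (c f) f) \<in> I"
      by (rule exI[of _ "\<lambda>g. \<alpha> g x"]) (use A(5) in blast)
  qed (use A(3) in blast)
  have afd: "\<alpha> g \<in> FD" if "g \<in> G" for g
    using A that by (intro fd_intro[OF _ A(1) fcI]) auto
  have key: "\<psi> (mul x y) = (\<Sum>(g,h)\<in>G \<times> G. (\<alpha> g x * \<psi> (mul g h)) * \<alpha> h y)" for x y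
  proof -
    define x' where "x' = (\<Sum>g\<in>G. scal (\<alpha> g x) g)"
    define y' where "y' = (\<Sum>g\<in>G. scal (\<alpha> g y) g)"
    have sI: "subsp I" using A(1) by (rule alg_ideal_subsp)
    have "x - x' \<in> I" "y - y' \<in> I" using A(5) unfolding x'_def y'_def by blast+
    then have "mul (x - x') y \<in> I" "mul x' (y - y') \<in> I" using ideal_mem[OF A(1)] by blast+
    then have "mul (x - x') y + mul x' (y - y') \<in> I" by (rule subsp_add[OF sI])
    moreover have "mul x y - mul x' y' = mul (x - x') y + mul x' (y - y')"
      by (simp add: mul_diff_l mul_diff_r)
    ultimately have "mul x y - mul x' y' \<in> I" by simp
    then have "\<psi> (mul x y - mul x' y') = 0" using A(2) by blast
    then have "\<psi> (mul x y) = \<psi> (mul x' y')" using l by (simp add: lin_diff)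
    also have "mul x' y' = (\<Sum>g\<in>G. mul (scal (\<alpha> g x) g) y')" by (simp only: x'_def mul_sum_l)
    also have "\<dots> = (\<Sum>g\<in>G. scal (\<alpha> g x) (mul g y'))" by (simp only: mul_scal_l)
    also have "\<dots> = (\<Sum>g\<in>G. scal (\<alpha> g x) (\<Sum>h\<in>G. scal (\<alpha> h y) (mul g h)))"
      by (simp only: y'_def mul_sum_r mul_scal_r)
    also have "\<psi> \<dots> = (\<Sum>g\<in>G. \<alpha> g x * (\<Sum>h\<in>G. \<alpha> h y * \<psi> (mul g h)))"
      using l by (simp add: lin_sum lin_scal)
    also have "\<dots> = (\<Sum>g\<in>G. \<Sum>h\<in>G. \<alpha> g x * (\<alpha> h y * \<psi> (mul g h)))"
      by (simp add: sum_distrib_left)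
    also have "\<dots> = (\<Sum>g\<in>G. \<Sum>h\<in>G. (\<alpha> g x * \<psi> (mul g h)) * \<alpha> h y)"
      by (intro sum.cong refl) (simp add: mult.commute mult.left_commute)
    also have "\<dots> = (\<Sum>(g,h)\<in>G \<times> G. (\<alpha> g x * \<psi> (mul g h)) * \<alpha> h y)"
      by (rule sum.cartesian_product)
    finally show ?thesis .
  qed
  obtain n :: nat and e where e: "bij_betw e {..<n} (G \<times> G)"
    using reindex_nat[OF finite_cartesian_product[OF A(3) A(3)]] by blast
  define u where "u i x = \<alpha> (fst (e i)) x * \<psi> (mul (fst (e i)) (snd (e i)))" for i x
  define v where "v i y = \<alpha> (snd (e i)) y" for i y
  show ?thesis
  proof -
    have 1: "u i \<in> FD \<and> v i \<in> FD" if i: "i < n" for i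
    proof -
      have "i \<in> {..<n}" using i by simp
      then have ei: "e i \<in> G \<times> G" by (rule bij_betw_apply[OF e])
      then have a1: "\<alpha> (fst (e i)) \<in> FD" "\<alpha> (snd (e i)) \<in> FD" using afd by auto
      have "(\<lambda>x. \<psi> (mul (fst (e i)) (snd (e i))) * \<alpha> (fst (e i)) x) \<in> FD" by (rule fd_scal[OF a1(1)])
      then have "u i \<in> FD" unfolding u_def by (simp add: mult.commute)
      then show "u i \<in> FD \<and> v i \<in> FD" unfolding v_def using a1(2) by simp
    qed
    have 2: "\<psi> (mul x y) = (\<Sum>i<n. u i x * v i y)" for x y
    proof -
      define F where "F = (\<lambda>(g,h). (\<alpha> g x * \<psi> (mul g h)) * \<alpha> h y)"
      have "(\<Sum>i<n. u i x * v i y) = (\<Sum>i<n. F (e i))"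
        by (rule sum.cong[OF refl]) (simp add: u_def v_def F_def case_prod_beta)
      also have "\<dots> = (\<Sum>p\<in>G \<times> G. F p)" by (rule sum.reindex_bij_betw[OF e])
      also have "\<dots> = \<psi> (mul x y)" unfolding F_def by (rule key[symmetric])
      finally show ?thesis by simp
    qed
    show ?thesis using 1 2 by blast
  qed
qed

end

lemma fd_pullback:
  fixes scalS :: "'k::field \<Rightarrow> 's::ab_group_add \<Rightarrow> 's" and scalR :: "'k \<Rightarrow> 'r::ab_group_add \<Rightarrow> 'r"
  assumes S: "kspace scalS" and R: "kalg scalR mulR"
    and hadd: "\<And>x y. h (x + y) = h x + h y" and hscal: "\<And>c x. h (scalS c x) = scalR c (h x)"
    and hmul: "\<And>x y. h (mulS x y) = mulR (h x) (h y)"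
    and psi: "\<psi> \<in> finite_dual mulR scalR"
  shows "(\<lambda>x. \<psi> (h x)) \<in> finite_dual mulS scalS"
proof -
  interpret R: kalg scalR mulR by (rule R)
  interpret S: kspace scalS by (rule S)
  obtain I G \<alpha> where A: "alg_ideal mulR scalR I" "\<forall>x\<in>I. \<psi> x = 0" "finite G" "\<forall>g\<in>G. R.lin (\<alpha> g)"
    "\<forall>x. x - (\<Sum>g\<in>G. scalR (\<alpha> g x) g) \<in> I" "\<forall>x. x \<in> I \<longleftrightarrow> (\<forall>g\<in>G. \<alpha> g x = 0)"
    by (rule R.fd_coords[OF psi])
  have h0: "h 0 = 0" using hadd[of 0 0] by simp
  have hneg: "h (- x) = - h x" for x using hadd[of x "-x"] h0 by (metis minus_unique add.right_inverse)
  have l: "R.lin \<psi>" using psi R.fd_lin by blast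
  define J where "J = {x. h x \<in> I}"
  have J: "J = {y. \<forall>g\<in>G. (\<lambda>x. \<alpha> g (h x)) y = 0}" using A(6) unfolding J_def by auto
  have linS: "\<forall>g\<in>G. S.lin (\<lambda>x. \<alpha> g (h x))" using A(4)
    unfolding R.lin_def S.lin_def by (simp add: hadd hscal)
  have AI: "0 \<in> I" "\<And>x y. x \<in> I \<Longrightarrow> y \<in> I \<Longrightarrow> x + y \<in> I" "\<And>x. x \<in> I \<Longrightarrow> - x \<in> I"
    "\<And>x c. x \<in> I \<Longrightarrow> scalR c x \<in> I" "\<And>x r. x \<in> I \<Longrightarrow> mulR r x \<in> I \<and> mulR x r \<in> I"
    using A(1) unfolding alg_ideal_def by blast+
  have idJ: "alg_ideal mulS scalS J"
    unfolding alg_ideal_def J_def by (simp add: h0 hadd hneg hscal hmul AI)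
  show ?thesis
  proof (rule S.fd_intro[OF _ idJ])
    show "S.lin (\<lambda>x. \<psi> (h x))" using l unfolding R.lin_def S.lin_def by (simp add: hadd hscal)
    show "fin_codim scalS J" unfolding J by (rule S.kernel_fin_codim[OF A(3) linS])
    show "\<forall>x\<in>J. \<psi> (h x) = 0" using A(2) unfolding J_def by simp
  qed
qed




definition Mp :: "'a::ring_1 \<Rightarrow> 'a poly \<Rightarrow> 'a poly" where
  "Mp a p = map_poly ((*) a) p"

lemma coeff_Mp[simp]: "coeff (Mp a p) i = a * coeff p i"
  unfolding Mp_def by (simp add: coeff_map_poly)

lemma Mp_add_r: "Mp a (p + q) = Mp a p + Mp a q" by (rule poly_eqI) (simp add: algebra_simps)
lemma Mp_add_l: "Mp (a + b) p = Mp a p + Mp b p" by (rule poly_eqI) (simp add: algebra_simps)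
lemma Mp_0_l[simp]: "Mp 0 p = 0" by (rule poly_eqI) simp
lemma Mp_0_r[simp]: "Mp a 0 = 0" by (rule poly_eqI) simp
lemma Mp_Mp: "Mp a (Mp b p) = Mp (a * b) p" by (rule poly_eqI) (simp add: mult.assoc)
lemma Mp_1[simp]: "Mp 1 p = p" by (rule poly_eqI) simp
lemma Mp_pCons: "Mp a (pCons c p) = pCons (a * c) (Mp a p)"
  by (rule poly_eqI) (simp add: coeff_pCons split: nat.splits)
lemma Mp_sum_r: "Mp a (\<Sum>i\<in>A. g i) = (\<Sum>i\<in>A. Mp a (g i))"
  by (induction A rule: infinite_finite_induct) (auto simp: Mp_add_r)
lemma Mp_sum_l: "Mp (\<Sum>i\<in>A. g i) p = (\<Sum>i\<in>A. Mp (g i) p)"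
  by (induction A rule: infinite_finite_induct) (auto simp: Mp_add_l)
lemma Mp_const: "Mp a [:c:] = [:a * c:]" by (rule poly_eqI) (simp add: coeff_pCons split: nat.splits)

lemma pCons0_add: "pCons 0 (p + q) = pCons 0 p + pCons 0 q" by (simp only: add_pCons add_0)
lemma pCons0_sum: "pCons 0 (\<Sum>i\<in>A. g i) = (\<Sum>i\<in>A. pCons 0 (g i))"
  by (induction A rule: infinite_finite_induct) (auto simp del: add_pCons simp add: pCons0_add)
lemma pCons_split: "pCons a p = [:a:] + pCons 0 p" by simp

locale ore =
  fixes \<iota> :: "'k::field \<Rightarrow> 'a::ring_1" and \<theta> \<delta> :: "'a \<Rightarrow> 'a"
  assumes alg: "k_algebra \<iota>"
    and theta_lin: "k_linear \<iota> \<theta>"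
    and theta_mult: "\<forall>a b. \<theta> (a * b) = \<theta> a * \<theta> b" and theta_one: "\<theta> 1 = 1"
    and delta_lin: "k_linear \<iota> \<delta>"
    and delta_der: "\<forall>a b. \<delta> (a * b) = \<theta> a * \<delta> b + \<delta> a * b"
begin

lemma th_add: "\<theta> (a + b) = \<theta> a + \<theta> b" using theta_lin unfolding k_linear_def by blast
lemma de_add: "\<delta> (a + b) = \<delta> a + \<delta> b" using delta_lin unfolding k_linear_def by blast
lemma th_0[simp]: "\<theta> 0 = 0" using th_add[of 0 0] by simp
lemma de_0[simp]: "\<delta> 0 = 0" using de_add[of 0 0] by simp
lemma th_mult: "\<theta> (a * b) = \<theta> a * \<theta> b" using theta_mult by blast
lemma de_mult: "\<delta> (a * b) = \<theta> a * \<delta> b + \<delta> a * b" using delta_der by blast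
lemma th_iota: "\<theta> (\<iota> c * a) = \<iota> c * \<theta> a" using theta_lin unfolding k_linear_def by blast
lemma de_iota: "\<delta> (\<iota> c * a) = \<iota> c * \<delta> a" using delta_lin unfolding k_linear_def by blast
lemma de_1[simp]: "\<delta> 1 = 0" using de_mult[of 1 1] theta_one by simp
lemma th_iota1[simp]: "\<theta> (\<iota> c) = \<iota> c" using th_iota[of c 1] theta_one by simp
lemma de_iota1[simp]: "\<delta> (\<iota> c) = 0" using de_iota[of c 1] by simp
lemma io_add: "\<iota> (x + y) = \<iota> x + \<iota> y" using alg unfolding k_algebra_def by blast
lemma io_mult: "\<iota> (x * y) = \<iota> x * \<iota> y" using alg unfolding k_algebra_def by blast
lemma io_1[simp]: "\<iota> 1 = 1" using alg unfolding k_algebra_def by blast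
lemma io_comm: "\<iota> c * a = a * \<iota> c" using alg unfolding k_algebra_def by blast
lemma io_0[simp]: "\<iota> 0 = 0" using io_add[of 0 0] by simp
lemma th_sum: "\<theta> (\<Sum>i\<in>A. g i) = (\<Sum>i\<in>A. \<theta> (g i))"
  by (induction A rule: infinite_finite_induct) (auto simp: th_add)
lemma de_sum: "\<delta> (\<Sum>i\<in>A. g i) = (\<Sum>i\<in>A. \<delta> (g i))"
  by (induction A rule: infinite_finite_induct) (auto simp: de_add)

abbreviation T where "T \<equiv> tmul \<theta> \<delta>"
abbreviation om where "om \<equiv> ore_mult \<theta> \<delta>"

lemma coeff_T: "coeff (T p) i = (if i = 0 then 0 else \<theta> (coeff p (i - 1))) + \<delta> (coeff p i)"
  unfolding tmul_def by (simp add: coeff_map_poly coeff_pCons split: nat.splits)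

lemma T_add: "T (p + q) = T p + T q"
  by (rule poly_eqI) (simp add: coeff_T th_add de_add algebra_simps)
lemma T_0[simp]: "T 0 = 0" by (rule poly_eqI) (simp add: coeff_T)
lemma T_sum: "T (\<Sum>i\<in>A. g i) = (\<Sum>i\<in>A. T (g i))"
  by (induction A rule: infinite_finite_induct) (auto simp: T_add)
lemma T_shift: "T (pCons 0 p) = pCons 0 (T p)"
  by (rule poly_eqI) (simp add: coeff_T coeff_pCons split: nat.splits)
lemma Tpow_add: "(T ^^ n) (p + q) = (T ^^ n) p + (T ^^ n) q"
  by (induction n) (auto simp: T_add)
lemma Tpow_0[simp]: "(T ^^ n) 0 = 0"
  by (induction n) auto
lemma Tpow_sum: "(T ^^ n) (\<Sum>i\<in>A. g i) = (\<Sum>i\<in>A. (T ^^ n) (g i))"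
  by (induction A rule: infinite_finite_induct) (auto simp: Tpow_add)
lemma Tpow_shift: "(T ^^ n) (pCons 0 p) = pCons 0 ((T ^^ n) p)"
  by (induction n) (auto simp: T_shift)
lemma Tpow_shiftpow: "(T ^^ n) ((pCons 0 ^^ j) p) = (pCons 0 ^^ j) ((T ^^ n) p)"
  by (induction j) (auto simp: Tpow_shift)
lemma T_Mp: "T (Mp b p) = Mp (\<theta> b) (T p) + Mp (\<delta> b) p"
  by (rule poly_eqI) (simp add: coeff_T th_mult de_mult algebra_simps)
lemma T_pCons: "T (pCons b x) = pCons (\<delta> b) ([:\<theta> b:] + T x)"
  by (rule poly_eqI) (simp add: coeff_T coeff_pCons split: nat.splits)

lemma shiftpow_const: "(pCons 0 ^^ j) [:c:] = monom c j"
  by (induction j) (auto simp: monom_0 monom_Suc)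

lemma om_sum: "om p q = (\<Sum>i\<le>degree p. Mp (coeff p i) ((T ^^ i) q))"
proof -
  have "(\<Sum>j\<le>degree q. (pCons 0 ^^ j) ((T ^^ i) [:coeff q j:])) = (T ^^ i) q" for i
  proof -
    have "(\<Sum>j\<le>degree q. (pCons 0 ^^ j) ((T ^^ i) [:coeff q j:])) = (\<Sum>j\<le>degree q. (T ^^ i) (monom (coeff q j) j))"
      by (rule sum.cong[OF refl]) (simp only: Tpow_shiftpow[symmetric] shiftpow_const)
    also have "\<dots> = (T ^^ i) (\<Sum>j\<le>degree q. monom (coeff q j) j)" by (simp add: Tpow_sum)
    finally show ?thesis by (simp add: poly_as_sum_of_monoms)
  qed
  note h = this
  show ?thesis unfolding ore_mult_def Mp_def[symmetric]
    by (rule sum.cong[OF refl]) (simp only: Mp_sum_r[symmetric] h)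
qed

lemma om_sum_bound:
  assumes "degree p \<le> N"
  shows "om p q = (\<Sum>i\<le>N. Mp (coeff p i) ((T ^^ i) q))"
  unfolding om_sum
proof (rule sum.mono_neutral_left)
  show "finite {..N}" by simp
  show "{..degree p} \<subseteq> {..N}" using assms by auto
  show "\<forall>i\<in>{..N} - {..degree p}. Mp (coeff p i) ((T ^^ i) q) = 0"
    by (auto simp: coeff_eq_0)
qed

lemma om_0l[simp]: "om 0 q = 0" by (simp add: om_sum)

lemma om_pCons: "om (pCons a p) q = Mp a q + om p (T q)"
proof -
  have "om (pCons a p) q = (\<Sum>i\<le>Suc (degree p). Mp (coeff (pCons a p) i) ((T ^^ i) q))"
    by (rule om_sum_bound) (rule degree_pCons_le)
  also have "\<dots> = Mp a q + (\<Sum>i\<le>degree p. Mp (coeff p i) ((T ^^ Suc i) q))"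
    by (subst sum.atMost_Suc_shift) simp
  also have "(\<Sum>i\<le>degree p. Mp (coeff p i) ((T ^^ Suc i) q)) = om p (T q)"
    by (simp add: om_sum funpow_swap1)
  finally show ?thesis .
qed

lemma om_const: "om [:a:] q = Mp a q" by (simp add: om_pCons)

lemma om_add_l: "om (p1 + p2) q = om p1 q + om p2 q"
proof -
  define N where "N = max (degree p1) (degree p2)"
  have d: "degree p1 \<le> N" "degree p2 \<le> N" "degree (p1 + p2) \<le> N"
    by (auto simp: N_def intro: degree_add_le)
  show ?thesis
    unfolding om_sum_bound[OF d(1)] om_sum_bound[OF d(2)] om_sum_bound[OF d(3)]
    by (simp add: Mp_add_l sum.distrib)
qed

lemma om_add_r: "om p (q1 + q2) = om p q1 + om p q2"
  unfolding om_sum by (simp add: Tpow_add Mp_add_r sum.distrib)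

lemma om_0r[simp]: "om p 0 = 0" using om_add_r[of p 0 0] by simp
lemma om_neg_l: "om (- p) q = - om p q"
  using om_add_l[of p "-p" q] by (metis add.right_inverse minus_unique om_0l)
lemma om_neg_r: "om p (- q) = - om p q"
  using om_add_r[of p q "-q"] by (metis add.right_inverse minus_unique om_0r)
lemma om_diff_l: "om (p1 - p2) q = om p1 q - om p2 q"
  using om_add_l[of p1 "-p2" q] om_neg_l by simp
lemma om_diff_r: "om p (q1 - q2) = om p q1 - om p q2"
  using om_add_r[of p q1 "-q2"] om_neg_r by simp
lemma om_sum_l: "om (\<Sum>i\<in>A. g i) q = (\<Sum>i\<in>A. om (g i) q)"
  by (induction A rule: infinite_finite_induct) (auto simp: om_add_l)
lemma om_sum_r: "om p (\<Sum>i\<in>A. g i) = (\<Sum>i\<in>A. om p (g i))"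
  by (induction A rule: infinite_finite_induct) (auto simp: om_add_r)

lemma degree_Mp: "degree (Mp a p) \<le> degree p"
  by (rule degree_le) (simp add: coeff_eq_0)

lemma om_Mp_l: "om (Mp a p) q = Mp a (om p q)"
proof -
  have "om (Mp a p) q = (\<Sum>i\<le>degree p. Mp (coeff (Mp a p) i) ((T ^^ i) q))"
    by (rule om_sum_bound[OF degree_Mp])
  then show ?thesis by (simp add: om_sum Mp_Mp Mp_sum_r)
qed

lemma om_T_l: "om (T x) r = T (om x r)"
proof (induction x arbitrary: r)
  case 0 then show ?case by simp
next
  case (pCons b x)
  have "om (T (pCons b x)) r = Mp (\<delta> b) r + om ([:\<theta> b:] + T x) (T r)"
    by (simp add: T_pCons om_pCons)
  also have "\<dots> = Mp (\<delta> b) r + Mp (\<theta> b) (T r) + T (om x (T r))"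
    by (simp add: om_add_l om_const pCons.IH)
  also have "\<dots> = T (om (pCons b x) r)"
    by (simp add: om_pCons T_add T_Mp algebra_simps)
  finally show ?case .
qed

lemma om_assoc: "om (om p q) r = om p (om q r)"
proof (induction p arbitrary: q)
  case 0 then show ?case by simp
next
  case (pCons a p)
  show ?case
    by (simp add: om_pCons om_add_l om_Mp_l pCons.IH om_T_l)
qed

lemma om_1l: "om [:1:] q = q" by (simp add: om_const)

lemma Tpow_pCons0: "(T ^^ i) (pCons 0 q) = pCons 0 ((T ^^ i) q)" by (rule Tpow_shift)

lemma Mp_shift: "Mp a (pCons 0 q) = pCons 0 (Mp a q)" by (simp add: Mp_pCons)

lemma om_shift_r: "om p (pCons 0 q) = pCons 0 (om p q)"
  unfolding om_sum by (simp add: Tpow_shift Mp_shift pCons0_sum)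

lemma T_one: "T [:1:] = pCons 0 [:1:]"
  by (rule poly_eqI) (simp add: coeff_T coeff_pCons theta_one split: nat.splits)

lemma om_1r: "om p [:1:] = p"
proof (induction p)
  case 0 then show ?case by simp
next
  case (pCons a p)
  then show ?case by (simp add: om_pCons T_one om_shift_r Mp_const)
qed

lemma T_Mp_io: "T (Mp (\<iota> c) p) = Mp (\<iota> c) (T p)" by (simp add: T_Mp)
lemma Tpow_Mp_io: "(T ^^ n) (Mp (\<iota> c) p) = Mp (\<iota> c) ((T ^^ n) p)"
  by (induction n) (auto simp: T_Mp_io)
lemma Mp_io_comm: "Mp a (Mp (\<iota> c) p) = Mp (\<iota> c) (Mp a p)"
  by (simp add: Mp_Mp io_comm)
lemma om_Mp_io_r: "om p (Mp (\<iota> c) q) = Mp (\<iota> c) (om p q)"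
  unfolding om_sum by (simp add: Tpow_Mp_io Mp_io_comm Mp_sum_r)

lemma ore_scal_Mp: "ore_scal \<iota> c p = Mp (\<iota> c) p"
  unfolding ore_scal_def Mp_def by simp

end



lemma tensor_span_intro:
  fixes n :: nat
  assumes "\<forall>i<n. c i \<in> C \<and> d i \<in> D" "T = (\<lambda>(x, y). \<Sum>i<n. c i x * d i y)"
  shows "T \<in> tensor_span C D"
  unfolding tensor_span_def using assms by blast

context ore begin

abbreviation scA where "scA \<equiv> (\<lambda>c (a::'a). \<iota> c * a)"

lemma kspace_A: "kspace scA"
  by unfold_locales (simp_all add: io_add io_mult algebra_simps)

lemma kalg_A: "kalg scA ((*) :: 'a \<Rightarrow> 'a \<Rightarrow> 'a)"
  by (rule kalg.intro[OF kspace_A]) (unfold_locales, simp_all add: algebra_simps, metis io_comm mult.assoc)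

lemma kspace_R: "kspace (ore_scal \<iota>)"
  by unfold_locales (simp_all add: ore_scal_Mp Mp_add_r Mp_add_l io_add io_mult Mp_Mp)

lemma kalg_R: "kalg (ore_scal \<iota>) om"
  by (rule kalg.intro[OF kspace_R]) (unfold_locales, simp_all add: ore_scal_Mp om_add_l om_add_r om_Mp_l om_Mp_io_r)

lemma kspace_P: "kspace (smult :: 'k \<Rightarrow> 'k poly \<Rightarrow> 'k poly)"
  by unfold_locales (simp_all add: smult_add_right smult_add_left)

lemma kalg_P: "kalg (smult :: 'k \<Rightarrow> 'k poly \<Rightarrow> 'k poly) (*)"
  by (rule kalg.intro[OF kspace_P]) (unfold_locales, simp_all add: algebra_simps)

definition emb :: "'k poly \<Rightarrow> 'a poly" where "emb q = map_poly \<iota> q"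
definition omg :: "'a \<Rightarrow> 'k poly \<Rightarrow> 'a poly" where "omg a q = map_poly (\<lambda>c. a * \<iota> c) q"

lemma coeff_emb[simp]: "coeff (emb q) i = \<iota> (coeff q i)" unfolding emb_def by (simp add: coeff_map_poly)
lemma coeff_omg[simp]: "coeff (omg a q) i = a * \<iota> (coeff q i)" unfolding omg_def by (simp add: coeff_map_poly)

lemma omg_Mp: "omg a q = Mp a (emb q)" by (rule poly_eqI) simp
lemma omg_om: "omg a q = om [:a:] (emb q)" by (simp add: omg_Mp om_const)
lemma omg_1: "omg 1 q = emb q" by (rule poly_eqI) simp
lemma omg_11: "omg 1 1 = [:1:]" by (rule poly_eqI) (simp add: coeff_pCons split: nat.splits)
lemma omg_add_r: "omg a (p + q) = omg a p + omg a q" by (rule poly_eqI) (simp add: io_add algebra_simps)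
lemma omg_pCons: "omg b (pCons c y) = pCons (b * \<iota> c) (omg b y)"
  by (rule poly_eqI) (simp add: coeff_pCons split: nat.splits)
lemma emb_shift: "emb (pCons 0 p) = pCons 0 (emb p)"
  by (rule poly_eqI) (simp add: coeff_pCons split: nat.splits)
lemma T_emb: "T (emb q) = pCons 0 (emb q)"
  by (rule poly_eqI) (simp add: coeff_T coeff_pCons split: nat.splits)
lemma Mp_emb: "Mp (b * \<iota> c) (emb p) = omg b (smult c p)"
  by (rule poly_eqI) (simp add: io_mult mult.assoc)
lemma omg_monom: "omg a (monom 1 j) = monom a j" by (rule poly_eqI) simp
lemma degree_omg: "degree (omg a q) \<le> degree q" by (rule degree_le) (simp add: coeff_eq_0)

lemma om_omg_emb: "om (omg b y) (emb p) = omg b (y * p)"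
proof (induction y arbitrary: p)
  case 0 then show ?case by (simp add: omg_def)
next
  case (pCons c y)
  have "om (omg b (pCons c y)) (emb p) = Mp (b * \<iota> c) (emb p) + om (omg b y) (emb (pCons 0 p))"
    by (simp add: omg_pCons om_pCons T_emb emb_shift)
  also have "\<dots> = omg b (smult c p) + omg b (y * pCons 0 p)" by (simp add: Mp_emb pCons.IH)
  also have "\<dots> = omg b (pCons c y * p)" by (simp add: omg_add_r)
  finally show ?case .
qed

lemma emb_mult: "emb (p * q) = om (emb p) (emb q)"
  using om_omg_emb[of 1 p q] by (simp add: omg_1)

lemma emb_add: "emb (p + q) = emb p + emb q" by (rule poly_eqI) (simp add: io_add)
lemma emb_smult: "emb (smult c q) = ore_scal \<iota> c (emb q)"
  by (rule poly_eqI) (simp add: ore_scal_Mp io_mult)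
lemma const_mult: "[:a * b:] = om [:a:] [:b:]" by (simp add: om_const Mp_const)
lemma const_add: "[:a + b:] = [:a:] + [:b:]" by simp
lemma const_scal: "[:\<iota> c * a:] = ore_scal \<iota> c [:a:]" by (simp add: ore_scal_Mp Mp_const)

abbreviation RR where "RR \<equiv> finite_dual om (ore_scal \<iota>)"
abbreviation CC where "CC \<equiv> finite_dual (*) scA"
abbreviation DD where "DD \<equiv> finite_dual (*) (smult :: 'k \<Rightarrow> 'k poly \<Rightarrow> 'k poly)"

definition fmap :: "('a poly \<Rightarrow> 'k) \<Rightarrow> ('a \<times> 'k poly \<Rightarrow> 'k)" where
  "fmap \<psi> = (\<lambda>z. \<psi> (omg (fst z) (snd z)))"

lemma pull_A: "u \<in> RR \<Longrightarrow> (\<lambda>a. u [:a:]) \<in> CC"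
  apply (rule fd_pullback[where h="\<lambda>a. [:a:]" and mulS="(*)" and scalS=scA, OF kspace_A kalg_R])
  by (rule const_add, rule const_scal, rule const_mult, assumption)

lemma pull_P: "u \<in> RR \<Longrightarrow> (\<lambda>q. u (emb q)) \<in> DD"
  apply (rule fd_pullback[where h=emb and mulS="(*)" and scalS=smult, OF kspace_P kalg_R])
  by (rule emb_add, rule emb_smult, rule emb_mult, assumption)

lemma fmap_into:
  assumes "\<psi> \<in> RR"
  shows "fmap \<psi> \<in> tensor_span CC DD"
proof -
  interpret R: kalg "ore_scal \<iota>" om by (rule kalg_R)
  obtain n :: nat and u v where uv: "\<forall>i<n. u i \<in> RR \<and> v i \<in> RR" "\<forall>x y. \<psi> (om x y) = (\<Sum>i<n. u i x * v i y)"
    using R.fd_finrank[OF assms] by blast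
  have "fmap \<psi> = (\<lambda>(x, y). \<Sum>i<n. (\<lambda>a. u i [:a:]) x * (\<lambda>q. v i (emb q)) y)"
    by (rule ext) (simp add: fmap_def omg_om uv(2) case_prod_beta)
  moreover have "\<forall>i<n. (\<lambda>a. u i [:a:]) \<in> CC \<and> (\<lambda>q. v i (emb q)) \<in> DD"
    using uv(1) pull_A pull_P by blast
  ultimately show ?thesis by (intro tensor_span_intro[of n "\<lambda>i a. u i [:a:]" CC "\<lambda>i q. v i (emb q)"]) auto
qed

lemma lin_expand:
  assumes "kspace.lin (ore_scal \<iota>) \<psi>"
  shows "\<psi> x = (\<Sum>j\<le>degree x. fmap \<psi> (coeff x j, monom 1 j))"
proof -
  interpret R: kspace "ore_scal \<iota>" by (rule kspace_R)
  have "\<psi> x = \<psi> (\<Sum>j\<le>degree x. monom (coeff x j) j)" by (simp add: poly_as_sum_of_monoms)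
  also have "\<dots> = (\<Sum>j\<le>degree x. \<psi> (monom (coeff x j) j))" using assms by (rule R.lin_sum)
  finally show ?thesis by (simp add: fmap_def omg_monom)
qed

lemma fmap_inj: "inj_on fmap RR"
proof (rule inj_onI)
  interpret R: kalg "ore_scal \<iota>" om by (rule kalg_R)
  fix \<psi>1 \<psi>2 assume a: "\<psi>1 \<in> RR" "\<psi>2 \<in> RR" "fmap \<psi>1 = fmap \<psi>2"
  show "\<psi>1 = \<psi>2"
  proof
    fix x show "\<psi>1 x = \<psi>2 x"
      using lin_expand[OF R.fd_lin[OF a(1)], of x] lin_expand[OF R.fd_lin[OF a(2)], of x] a(3) by simp
  qed
qed

end



lemma word_op_Nil[simp]: "word_op \<theta> \<delta> [] = id" by (simp add: word_op_def)
lemma word_op_Cons[simp]: "word_op \<theta> \<delta> (b # w) = (if b then \<theta> else \<delta>) \<circ> word_op \<theta> \<delta> w"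
  by (simp add: word_op_def)

lemma words_0: "words i 0 = (if i = 0 then {[]} else {})" by (auto simp: words_def)

lemma words_Suc: "words i (Suc n) = (if i = 0 then {} else Cons True ` words (i - 1) n) \<union> Cons False ` words i n"
proof (rule set_eqI)
  fix w
  show "w \<in> words i (Suc n) \<longleftrightarrow> w \<in> (if i = 0 then {} else Cons True ` words (i - 1) n) \<union> Cons False ` words i n"
  proof (cases w)
    case Nil then show ?thesis by (auto simp: words_def)
  next
    case (Cons b w')
    then show ?thesis by (cases b) (auto simp: words_def)
  qed
qed

lemma finite_words: "finite (words i n)"
proof -
  have "words i n \<subseteq> {xs. set xs \<subseteq> (UNIV :: bool set) \<and> length xs = n}" by (auto simp: words_def)
  moreover have "finite {xs. set xs \<subseteq> (UNIV :: bool set) \<and> length xs = n}"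
    by (rule finite_lists_length_eq) simp
  ultimately show ?thesis by (rule finite_subset)
qed

lemma words_big: "n < i \<Longrightarrow> words i n = {}"
  by (auto simp: words_def) (metis length_filter_le not_le)

lemma words_diag: "words n n = {replicate n True}"
proof (rule set_eqI)
  fix w
  show "w \<in> words n n \<longleftrightarrow> w \<in> {replicate n True}"
  proof
    assume w: "w \<in> words n n"
    then have l: "length w = n" "length (filter id w) = n" by (auto simp: words_def)
    have "\<forall>y\<in>set w. y = True"
    proof
      fix y assume y: "y \<in> set w"
      show "y = True"
      proof (rule ccontr)
        assume "y \<noteq> True"
        then have "length (filter id w) < length w" using length_filter_less[OF y, of id] by simp
        then show False using l by simp
      qed
    qed
    then have "replicate (length w) True = w" by (rule replicate_length_same)
    then show "w \<in> {replicate n True}" using l by simp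
  next
    assume "w \<in> {replicate n True}"
    then show "w \<in> words n n" by (simp add: words_def)
  qed
qed

lemma word_op_rep: "word_op \<theta> \<delta> (replicate n True) = \<theta> ^^ n"
  by (induction n) auto

context ore begin

definition Sw :: "nat \<Rightarrow> nat \<Rightarrow> 'a \<Rightarrow> 'a" where
  "Sw i n a = (\<Sum>w\<in>words i n. word_op \<theta> \<delta> w a)"

lemma sum_Cons_img:
  "(\<Sum>w\<in>Cons b ` W. word_op \<theta> \<delta> w a) = (\<Sum>w\<in>W. (if b then \<theta> else \<delta>) (word_op \<theta> \<delta> w a))"
  by (subst sum.reindex) (auto simp: inj_on_def)

lemma Sw_Suc: "Sw i (Suc n) a = (if i = 0 then 0 else \<theta> (Sw (i - 1) n a)) + \<delta> (Sw i n a)"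
proof -
  have disj: "(if i = 0 then {} else Cons True ` words (i - 1) n) \<inter> Cons False ` words i n = {}" by auto
  have fin: "finite (if i = 0 then {} else Cons True ` words (i - 1) n)" "finite (Cons False ` words i n)"
    by (auto simp: finite_words)
  have "Sw i (Suc n) a = (\<Sum>w\<in>(if i = 0 then {} else Cons True ` words (i - 1) n). word_op \<theta> \<delta> w a)
      + (\<Sum>w\<in>Cons False ` words i n. word_op \<theta> \<delta> w a)"
    unfolding Sw_def words_Suc by (rule sum.union_disjoint[OF fin disj])
  also have "\<dots> = (if i = 0 then 0 else \<theta> (Sw (i - 1) n a)) + \<delta> (Sw i n a)"
    by (cases "i = 0") (simp_all add: sum_Cons_img Sw_def th_sum de_sum)
  finally show ?thesis .
qed

lemma coeff_Tpow_const: "coeff ((T ^^ n) [:a:]) i = Sw i n a"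
proof (induction n arbitrary: i)
  case 0
  then show ?case by (simp add: Sw_def words_0 coeff_pCons split: nat.splits)
next
  case (Suc n)
  show ?case
    by (cases i) (simp_all add: coeff_T Suc.IH Sw_Suc)
qed

end

locale ore_d = ore +
  fixes d :: nat
  assumes d_pos: "0 < d" and theta_d: "\<theta> ^^ d = id"
    and words_zero: "\<forall>i<d. \<forall>a. (\<Sum>w\<in>words i d. word_op \<theta> \<delta> w a) = 0"
begin

lemma Tpow_d_const: "(T ^^ d) [:a:] = monom a d"
proof (rule poly_eqI)
  fix i
  show "coeff ((T ^^ d) [:a:]) i = coeff (monom a d) i"
  proof (cases "i < d")
    case True then show ?thesis using words_zero by (simp add: coeff_Tpow_const Sw_def)
  next
    case False
    show ?thesis
    proof (cases "i = d")
      case True then show ?thesis by (simp add: coeff_Tpow_const Sw_def words_diag word_op_rep theta_d)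
    next
      case False
      then have "d < i" using \<open>\<not> i < d\<close> by simp
      then show ?thesis by (simp add: coeff_Tpow_const Sw_def words_big)
    qed
  qed
qed

lemma shiftpow_add: "(pCons 0 ^^ n) (p + q) = (pCons 0 ^^ n) p + (pCons 0 ^^ n) q"
  by (induction n) (simp_all del: add_pCons add: pCons0_add)

lemma Tpow_d: "(T ^^ d) r = (pCons 0 ^^ d) r"
proof (induction r)
  case 0
  have "(pCons 0 ^^ n) 0 = 0" for n :: nat by (induction n) auto
  then show ?case by simp
next
  case (pCons a r)
  have "(T ^^ d) (pCons a r) = (T ^^ d) [:a:] + pCons 0 ((T ^^ d) r)"
    by (subst pCons_split) (simp only: Tpow_add Tpow_shift)
  also have "\<dots> = (pCons 0 ^^ d) [:a:] + pCons 0 ((pCons 0 ^^ d) r)"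
    by (simp only: Tpow_d_const pCons.IH shiftpow_const)
  also have "\<dots> = (pCons 0 ^^ d) (pCons a r)"
    by (subst (2) pCons_split) (simp only: shiftpow_add funpow_swap1)
  finally show ?case .
qed

lemma om_shiftpow_l: "om ((pCons 0 ^^ n) p) r = om p ((T ^^ n) r)"
proof (induction n arbitrary: r)
  case 0 then show ?case by simp
next
  case (Suc n)
  have "om ((pCons 0 ^^ Suc n) p) r = om ((pCons 0 ^^ n) p) (T r)" by (simp add: om_pCons)
  also have "\<dots> = om p ((T ^^ n) (T r))" by (rule Suc.IH)
  finally show ?case by (simp add: funpow_swap1)
qed

lemma om_shiftpow_r: "om r ((pCons 0 ^^ n) p) = (pCons 0 ^^ n) (om r p)"
  by (induction n) (auto simp: om_shift_r)

definition cent where "cent c \<longleftrightarrow> (\<forall>r. om c r = om r c)"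

lemma cent_z: "cent (monom 1 d)"
  unfolding cent_def
proof
  fix r
  have m: "monom 1 d = (pCons 0 ^^ d) [:1:]" by (simp add: shiftpow_const)
  show "om (monom 1 d) r = om r (monom 1 d)"
    unfolding m om_shiftpow_l om_shiftpow_r by (simp add: om_1l om_1r Tpow_d)
qed

lemma cent_add: "cent a \<Longrightarrow> cent b \<Longrightarrow> cent (a + b)"
  unfolding cent_def by (simp add: om_add_l om_add_r)

lemma cent_mult: "cent a \<Longrightarrow> cent b \<Longrightarrow> cent (om a b)"
  unfolding cent_def by (metis om_assoc)

lemma cent_io: "cent [:\<iota> c:]"
  unfolding cent_def
proof
  fix r
  have "om r [:\<iota> c:] = om r (Mp (\<iota> c) [:1:])" by (simp add: Mp_const)
  also have "\<dots> = Mp (\<iota> c) r" by (simp add: om_Mp_io_r om_1r)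
  finally show "om [:\<iota> c:] r = om r [:\<iota> c:]" by (simp add: om_const)
qed

lemma emb_const: "emb [:c:] = [:\<iota> c:]" by (rule poly_eqI) (simp add: coeff_pCons split: nat.splits)
lemma emb_monom1: "emb (monom 1 n) = monom 1 n" by (rule poly_eqI) simp

lemma cent_emb_comp: "cent (emb (pcompose m (monom 1 d)))"
proof (induction m)
  case 0
  have "emb 0 = 0" by (rule poly_eqI) simp
  then show ?case by (simp add: cent_def)
next
  case (pCons a m)
  have "emb (pcompose (pCons a m) (monom 1 d)) = [:\<iota> a:] + om (monom 1 d) (emb (pcompose m (monom 1 d)))"
    by (simp add: pcompose_pCons emb_add emb_mult emb_const emb_monom1)
  then show ?case using cent_add cent_mult cent_io cent_z pCons.IH by simp
qed

end



context ore begin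

definition Psi :: "('a \<Rightarrow> 'k) \<Rightarrow> ('k poly \<Rightarrow> 'k) \<Rightarrow> 'a poly \<Rightarrow> 'k" where
  "Psi c e x = (\<Sum>j\<le>degree x. c (coeff x j) * e (monom 1 j))"

lemma linA_0: "kspace.lin scA c \<Longrightarrow> c 0 = 0"
  using kspace.lin_0[OF kspace_A] by blast

lemma Psi_bound:
  assumes c: "kspace.lin scA c" and N: "degree x \<le> N"
  shows "Psi c e x = (\<Sum>j\<le>N. c (coeff x j) * e (monom 1 j))"
  unfolding Psi_def
proof (rule sum.mono_neutral_left)
  show "finite {..N}" by simp
  show "{..degree x} \<subseteq> {..N}" using N by auto
  show "\<forall>i\<in>{..N} - {..degree x}. c (coeff x i) * e (monom 1 i) = 0"
    using linA_0[OF c] by (auto simp: coeff_eq_0)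
qed

lemma Psi_omg:
  assumes c: "kspace.lin scA c" and e: "kspace.lin smult e"
  shows "Psi c e (omg a q) = c a * e q"
proof -
  interpret A: kspace scA by (rule kspace_A)
  interpret P: kspace "smult :: 'k \<Rightarrow> 'k poly \<Rightarrow> 'k poly" by (rule kspace_P)
  have "Psi c e (omg a q) = (\<Sum>j\<le>degree q. c (a * \<iota> (coeff q j)) * e (monom 1 j))"
    by (simp add: Psi_bound[OF c degree_omg])
  also have "\<dots> = (\<Sum>j\<le>degree q. c a * (coeff q j * e (monom 1 j)))"
    by (rule sum.cong[OF refl]) (simp add: io_comm[symmetric] A.lin_scal[OF c] mult_ac)
  also have "\<dots> = c a * (\<Sum>j\<le>degree q. e (smult (coeff q j) (monom 1 j)))"
    by (simp add: sum_distrib_left P.lin_scal[OF e])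
  also have "(\<Sum>j\<le>degree q. e (smult (coeff q j) (monom 1 j))) = e (\<Sum>j\<le>degree q. smult (coeff q j) (monom 1 j))"
    by (rule P.lin_sum[OF e, symmetric])
  also have "(\<Sum>j\<le>degree q. smult (coeff q j) (monom 1 j)) = q"
    by (simp add: smult_monom poly_as_sum_of_monoms)
  finally show ?thesis .
qed

lemma Psi_lin:
  assumes c: "kspace.lin scA c"
  shows "kspace.lin (ore_scal \<iota>) (Psi c e)"
proof -
  interpret A: kspace scA by (rule kspace_A)
  interpret R: kspace "ore_scal \<iota>" by (rule kspace_R)
  show ?thesis unfolding R.lin_def
  proof (intro conjI allI)
    fix x y :: "'a poly"
    define N where "N = max (degree x) (degree y)"
    have d: "degree x \<le> N" "degree y \<le> N" "degree (x + y) \<le> N"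
      by (auto simp: N_def intro: degree_add_le)
    show "Psi c e (x + y) = Psi c e x + Psi c e y"
      unfolding Psi_bound[OF c d(1)] Psi_bound[OF c d(2)] Psi_bound[OF c d(3)]
      by (simp add: A.lin_add[OF c] sum.distrib algebra_simps)
  next
    fix k and x :: "'a poly"
    have d: "degree (ore_scal \<iota> k x) \<le> degree x" unfolding ore_scal_Mp by (rule degree_Mp)
    show "Psi c e (ore_scal \<iota> k x) = k * Psi c e x"
      using Psi_bound[OF c d, of e] unfolding Psi_def[of c e x]
      by (simp add: ore_scal_Mp A.lin_scal[OF c] sum_distrib_left mult.assoc)
  qed
qed

lemma Psi_J:
  assumes c: "kspace.lin scA c" and cJ: "\<forall>x\<in>J. c x = 0" and z: "\<forall>j. coeff z j \<in> J"
  shows "Psi c e z = 0"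
  unfolding Psi_def using cJ z by simp

lemma coeff_ideal_om:
  assumes J0: "0 \<in> J" and Jadd: "\<And>x y. x \<in> J \<Longrightarrow> y \<in> J \<Longrightarrow> x + y \<in> J"
    and Jr: "\<And>x r. x \<in> J \<Longrightarrow> x * r \<in> J"
    and p: "\<forall>i. coeff p i \<in> J"
  shows "\<forall>i. coeff (om p y) i \<in> J"
  using p
proof (induction p arbitrary: y)
  case 0 then show ?case using J0 by simp
next
  case (pCons a p)
  have a: "a \<in> J" using pCons.prems[rule_format, of 0] by simp
  have p: "\<forall>i. coeff p i \<in> J" using pCons.prems[rule_format, of "Suc i" for i] by simp
  show ?case
    by (simp add: om_pCons Jadd Jr a pCons.IH[OF p, rule_format])
qed

lemma om_const_B:
  assumes "\<theta> b = b" "\<delta> b = 0"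
  shows "coeff (om u [:b:]) i = coeff u i * b"
proof (induction u arbitrary: i)
  case 0 then show ?case by simp
next
  case (pCons a u)
  have Tb: "T [:b:] = pCons 0 [:b:]"
    by (rule poly_eqI) (simp add: coeff_T coeff_pCons assms split: nat.splits)
  have "om (pCons a u) [:b:] = pCons (a * b) (om u [:b:])"
    by (simp add: om_pCons Tb om_shift_r Mp_const)
  then show ?case by (simp add: coeff_pCons pCons.IH split: nat.splits)
qed

end



context ore begin

lemma coeff_om_monom_emb:
  "coeff (om (monom a k) (emb H)) j = a * \<iota> (if j < k then 0 else coeff H (j - k))"
proof -
  have "om (monom a k) (emb H) = omg a (monom 1 k * H)"
    by (simp add: omg_monom[symmetric] om_omg_emb)
  then show ?thesis by (simp add: coeff_monom_mult)
qed

lemma divide_emb: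
  assumes H: "lead_coeff H = 1"
  shows "\<exists>r rem. x = om r (emb H) + rem \<and> (\<forall>j\<ge>degree H. coeff rem j = 0)"
proof -
  have "\<forall>x. (\<forall>j\<ge>n. coeff x j = 0) \<longrightarrow> (\<exists>r rem. x = om r (emb H) + rem \<and> (\<forall>j\<ge>degree H. coeff rem j = 0))" for n
  proof (induction n)
    case 0
    show ?case
    proof (intro allI impI)
      fix x :: "'a poly" assume "\<forall>j\<ge>0. coeff x j = 0"
      then have "x = 0" by (intro poly_eqI) simp
      then show "\<exists>r rem. x = om r (emb H) + rem \<and> (\<forall>j\<ge>degree H. coeff rem j = 0)"
        by (intro exI[of _ 0]) simp
    qed
  next
    case (Suc n)
    show ?case
    proof (intro allI impI)
      fix x :: "'a poly" assume x: "\<forall>j\<ge>Suc n. coeff x j = 0"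
      show "\<exists>r rem. x = om r (emb H) + rem \<and> (\<forall>j\<ge>degree H. coeff rem j = 0)"
      proof (cases "n < degree H")
        case True
        then show ?thesis using x by (intro exI[of _ 0] exI[of _ x]) auto
      next
        case False
        define k where "k = n - degree H"
        define a where "a = coeff x n"
        define x' where "x' = x - om (monom a k) (emb H)"
        have "\<forall>j\<ge>n. coeff x' j = 0"
        proof (intro allI impI)
          fix j assume j: "n \<le> j"
          show "coeff x' j = 0"
          proof (cases "j = n")
            case True
            have "j - k = degree H" using False True k_def by simp
            moreover have "\<not> n < n - degree H" by simp
            ultimately show ?thesis using True False H
              by (simp add: x'_def coeff_om_monom_emb k_def a_def)
          next
            case False
            then have "Suc n \<le> j" using j by simp
            moreover have "degree H < j - k" using False j \<open>\<not> n < degree H\<close> k_def by simp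
            ultimately show ?thesis using x
              by (simp add: x'_def coeff_om_monom_emb k_def coeff_eq_0)
          qed
        qed
        then obtain r rem where rr: "x' = om r (emb H) + rem" "\<forall>j\<ge>degree H. coeff rem j = 0"
          using Suc.IH by blast
        have "x = om (monom a k + r) (emb H) + rem" using rr(1) unfolding x'_def
          by (simp add: om_add_l algebra_simps)
        then show ?thesis using rr(2) by blast
      qed
    qed
  qed
  moreover have "\<forall>j\<ge>Suc (degree x). coeff x j = 0" by (simp add: coeff_eq_0)
  ultimately show ?thesis by blast
qed

lemma exists_H:
  assumes e: "e \<in> DD" and d_pos: "0 < d"
  shows "\<exists>m. lead_coeff (pcompose m (monom 1 d)) = 1 \<and> (\<forall>q. e (q * pcompose m (monom 1 d)) = 0)"
proof -
  interpret P: kalg "smult :: 'k \<Rightarrow> 'k poly \<Rightarrow> 'k poly" "(*)" by (rule kalg_P)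
  obtain Q G \<alpha> where A: "alg_ideal (*) smult Q" "\<forall>x\<in>Q. e x = 0" "finite G" "\<forall>g\<in>G. P.lin (\<alpha> g)"
    "\<forall>x. x - (\<Sum>g\<in>G. smult (\<alpha> g x) g) \<in> Q" "\<forall>x. x \<in> Q \<longleftrightarrow> (\<forall>g\<in>G. \<alpha> g x = 0)"
    by (rule P.fd_coords[OF e])
  define \<beta> where "\<beta> g m = \<alpha> g (pcompose m (monom 1 d))" for g m
  have linb: "\<forall>g\<in>G. P.lin (\<beta> g)" using A(4) unfolding P.lin_def \<beta>_def
    by (simp add: pcompose_add pcompose_smult)
  have V: "P.subsp UNIV" unfolding P.subsp_def by simp
  obtain H0 where H0: "finite H0"
    "\<forall>x. \<exists>c. x - (\<Sum>h\<in>H0. smult (c h) h) \<in> {y. \<forall>g\<in>G. \<beta> g y = 0}"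
    using P.kernel_fin[OF V A(3) linb] by auto
  define M where "M = Suc (\<Sum>h\<in>H0. degree h)"
  obtain c where c: "monom 1 M - (\<Sum>h\<in>H0. smult (c h) h) \<in> {y. \<forall>g\<in>G. \<beta> g y = 0}"
    using H0(2) by blast
  define m0 where "m0 = monom 1 M - (\<Sum>h\<in>H0. smult (c h) h)"
  have dsum: "degree (\<Sum>h\<in>H0. smult (c h) h) < M"
  proof -
    have "degree (\<Sum>h\<in>H0. smult (c h) h) \<le> (\<Sum>h\<in>H0. degree h)"
    proof (rule degree_sum_le[OF H0(1)])
      fix h assume "h \<in> H0"
      then have "degree h \<le> (\<Sum>h\<in>H0. degree h)" using H0(1) by (intro member_le_sum) auto
      then show "degree (smult (c h) h) \<le> (\<Sum>h\<in>H0. degree h)" using degree_smult_le order_trans by blast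
    qed
    then show ?thesis unfolding M_def by simp
  qed
  have cm: "coeff m0 M = 1" unfolding m0_def using dsum by (simp add: coeff_eq_0)
  have "degree m0 \<le> M" unfolding m0_def
    by (rule degree_diff_le) (use dsum degree_monom_le in auto)
  moreover have "M \<le> degree m0" using cm by (intro le_degree) simp
  ultimately have dm: "degree m0 = M" by simp
  have lm: "lead_coeff m0 = 1" using cm dm by simp
  define H where "H = pcompose m0 (monom 1 d)"
  have "lead_coeff H = lead_coeff m0 * lead_coeff (monom (1::'k) d) ^ degree m0"
    unfolding H_def by (rule lead_coeff_comp) (simp add: degree_monom_eq d_pos)
  moreover have "lead_coeff (monom (1::'k) d) = 1" by (rule lead_coeff_monom)
  ultimately have lH: "lead_coeff H = 1" using lm by (simp only: power_one mult_1)
  have "H \<in> Q" using c A(6) unfolding H_def m0_def \<beta>_def by simp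
  then have "\<forall>q. e (q * H) = 0" using A(1,2) P.ideal_mem by blast
  then show ?thesis using lH unfolding H_def by blast
qed

end



locale ore_f = ore_d +
  assumes fin_left: "fin_gen_left {a. \<theta> a = a \<and> \<delta> a = 0}"
begin

lemma Mp_monom: "Mp a (monom b j) = monom (a * b) j" by (rule poly_eqI) simp

lemma Psi_RR:
  assumes c: "c \<in> CC" and e: "e \<in> DD"
  shows "Psi c e \<in> RR"
proof -
  interpret A: kalg scA "(*)" by (rule kalg_A)
  interpret R: kalg "ore_scal \<iota>" om by (rule kalg_R)
  have lc: "A.lin c" using c by (rule A.fd_lin)
  have le: "kspace.lin smult e" by (rule kalg.fd_lin[OF kalg_P e])
  have lP: "R.lin (Psi c e)" by (rule Psi_lin[OF lc])
  obtain J G \<alpha> where JA: "alg_ideal (*) scA J" "\<forall>x\<in>J. c x = 0" "finite G" "\<forall>g\<in>G. A.lin (\<alpha> g)"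
    "\<forall>x. x - (\<Sum>g\<in>G. scA (\<alpha> g x) g) \<in> J" "\<forall>x. x \<in> J \<longleftrightarrow> (\<forall>g\<in>G. \<alpha> g x = 0)"
    by (rule A.fd_coords[OF c])
  have J0: "0 \<in> J" and Jadd: "\<And>x y. x \<in> J \<Longrightarrow> y \<in> J \<Longrightarrow> x + y \<in> J"
    and Jm: "\<And>x r. x \<in> J \<Longrightarrow> r * x \<in> J \<and> x * r \<in> J"
    using JA(1) unfolding alg_ideal_def by blast+
  define B where "B = {a. \<theta> a = a \<and> \<delta> a = 0}"
  have sB: "A.subsp B" unfolding A.subsp_def B_def by (simp add: th_add de_add th_iota de_iota)
  obtain E where E: "finite E" "E \<subseteq> B"
    "\<forall>x\<in>B. \<exists>ce. x - (\<Sum>h\<in>E. scA (ce h) h) \<in> {y\<in>B. \<forall>g\<in>G. \<alpha> g y = 0}"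
    using A.kernel_fin[OF sB JA(3,4)] by blast
  obtain m where m: "lead_coeff (pcompose m (monom 1 d)) = 1" "\<forall>q. e (q * pcompose m (monom 1 d)) = 0"
    using exists_H[OF e d_pos] by blast
  define H where "H = pcompose m (monom 1 d)"
  have lH: "lead_coeff H = 1" and eH: "\<And>q. e (q * H) = 0" using m unfolding H_def by auto
  have cH: "cent (emb H)" unfolding H_def by (rule cent_emb_comp)
  obtain S where S: "finite S" "\<forall>a. \<exists>b. (\<forall>s\<in>S. b s \<in> B) \<and> a = (\<Sum>s\<in>S. b s * s)"
    using fin_left unfolding fin_gen_left_def B_def by blast
  define K where "K = {x. \<forall>u v. Psi c e (om (om u x) v) = 0}"
  have idK: "alg_ideal om (ore_scal \<iota>) K"
    unfolding alg_ideal_def K_def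
    by (simp add: R.lin_0[OF lP] om_add_l om_add_r R.lin_add[OF lP] om_neg_l om_neg_r R.lin_neg[OF lP]
          ore_scal_Mp om_Mp_io_r om_Mp_l R.lin_scal[OF lP, unfolded ore_scal_Mp] om_assoc[symmetric])
      (metis om_assoc)
  have PK: "\<forall>x\<in>K. Psi c e x = 0"
    unfolding K_def by (metis (mono_tags, lifting) mem_Collect_eq om_1l om_1r)
  have sK: "R.subsp K" by (rule R.alg_ideal_subsp[OF idK])
  have PsiH: "Psi c e (om w (emb H)) = 0" for w
  proof -
    have "om w (emb H) = (\<Sum>j\<le>degree w. om (monom (coeff w j) j) (emb H))"
      by (subst (1) poly_as_sum_of_monoms[symmetric, of w]) (simp only: om_sum_l)
    also have "\<dots> = (\<Sum>j\<le>degree w. omg (coeff w j) (monom 1 j * H))"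
      by (simp add: omg_monom[symmetric] om_omg_emb)
    finally have "Psi c e (om w (emb H)) = (\<Sum>j\<le>degree w. Psi c e (omg (coeff w j) (monom 1 j * H)))"
      using R.lin_sum[OF lP] by simp
    also have "\<dots> = 0" by (simp add: Psi_omg[OF lc le] eH)
    finally show ?thesis .
  qed
  have K1: "om r (emb H) \<in> K" for r
    unfolding K_def
  proof (intro CollectI allI)
    fix u v
    have "om (om u (om r (emb H))) v = om (om (om u r) v) (emb H)"
      using cH unfolding cent_def by (metis om_assoc)
    then show "Psi c e (om (om u (om r (emb H))) v) = 0" by (simp add: PsiH)
  qed
  have K2: "monom (b * s) j \<in> K" if b: "b \<in> B" "b \<in> J" for b s j
    unfolding K_def
  proof (intro CollectI allI)
    fix u v
    have bt: "\<theta> b = b" "\<delta> b = 0" using b unfolding B_def by auto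
    have "monom (b * s) j = om [:b:] (monom s j)" by (simp add: om_const Mp_monom)
    then have eq: "om (om u (monom (b * s) j)) v = om (om (om u [:b:]) (monom s j)) v" by (simp add: om_assoc)
    have c1: "\<forall>i. coeff (om u [:b:]) i \<in> J" using om_const_B[OF bt] Jm b(2) by simp
    have Jr: "\<And>x r. x \<in> J \<Longrightarrow> x * r \<in> J" using Jm by blast
    have c2: "\<forall>i. coeff (om (om u [:b:]) (monom s j)) i \<in> J" by (rule coeff_ideal_om[OF J0 Jadd Jr c1])
    have c3: "\<forall>i. coeff (om (om (om u [:b:]) (monom s j)) v) i \<in> J" by (rule coeff_ideal_om[OF J0 Jadd Jr c2])
    show "Psi c e (om (om u (monom (b * s) j)) v) = 0" unfolding eq by (rule Psi_J[OF lc JA(2) c3])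
  qed
  have fK: "fin_codim (ore_scal \<iota>) K"
  proof (rule R.fin_codim_family[where S="{..<degree H} \<times> (S \<times> E)" and v="\<lambda>(j,(s,f)). monom (f * s) j"])
    show "finite ({..<degree H} \<times> (S \<times> E))" using S(1) E(1) by simp
    show "\<forall>x. \<exists>cf. x - (\<Sum>i\<in>{..<degree H} \<times> (S \<times> E). ore_scal \<iota> (cf i) ((\<lambda>(j,(s,f)). monom (f * s) j) i)) \<in> K"
    proof
      fix x
      obtain r rem where rr: "x = om r (emb H) + rem" "\<forall>j\<ge>degree H. coeff rem j = 0"
        using divide_emb[OF lH] by blast
      have "\<forall>j. \<exists>b. (\<forall>s\<in>S. b s \<in> B) \<and> coeff rem j = (\<Sum>s\<in>S. b s * s)" using S(2) by blast
      from choice[OF this] obtain bb where bb: "\<forall>j. (\<forall>s\<in>S. bb j s \<in> B) \<and> coeff rem j = (\<Sum>s\<in>S. bb j s * s)"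
        by blast
      have "\<forall>p. \<exists>ce. snd p \<in> S \<longrightarrow> bb (fst p) (snd p) - (\<Sum>h\<in>E. \<iota> (ce h) * h) \<in> {y\<in>B. \<forall>g\<in>G. \<alpha> g y = 0}"
        using E(3) bb by blast
      from choice[OF this] obtain ce where ce:
        "\<forall>p. snd p \<in> S \<longrightarrow> bb (fst p) (snd p) - (\<Sum>h\<in>E. \<iota> (ce p h) * h) \<in> {y\<in>B. \<forall>g\<in>G. \<alpha> g y = 0}"
        by blast
      define \<beta> where "\<beta> j s = bb j s - (\<Sum>h\<in>E. \<iota> (ce (j, s) h) * h)" for j s
      have \<beta>BJ: "\<beta> j s \<in> B" "\<beta> j s \<in> J" if "s \<in> S" for j s
        using ce[rule_format, of "(j, s)"] that JA(6) unfolding \<beta>_def by auto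
      define D where "D = degree H"
      define Y where "Y = (\<Sum>j<D. \<Sum>s\<in>S. monom (\<beta> j s * s) j)"
      have YK: "Y \<in> K" unfolding Y_def
        by (intro R.subsp_sum[OF sK] K2 \<beta>BJ)
      have remsum: "rem = (\<Sum>j<D. monom (coeff rem j) j)"
        by (rule poly_eqI) (use rr(2) in \<open>auto simp: coeff_sum D_def not_less\<close>)
      have "(\<Sum>i\<in>{..<D} \<times> (S \<times> E). ore_scal \<iota> ((\<lambda>(j,(s,f)). ce (j, s) f) i) ((\<lambda>(j,(s,f)). monom (f * s) j) i))
          = (\<Sum>j<D. \<Sum>s\<in>S. \<Sum>f\<in>E. monom (\<iota> (ce (j, s) f) * (f * s)) j)"
        by (simp add: sum.cartesian_product ore_scal_Mp Mp_monom case_prod_beta)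
      also have "\<dots> = (\<Sum>j<D. \<Sum>s\<in>S. monom ((\<Sum>f\<in>E. \<iota> (ce (j, s) f) * f) * s) j)"
        by (intro sum.cong refl) (simp add: monom_sum sum_distrib_right mult.assoc)
      also have "\<dots> = (\<Sum>j<D. \<Sum>s\<in>S. monom (bb j s * s) j - monom (\<beta> j s * s) j)"
        by (intro sum.cong refl) (simp add: \<beta>_def diff_monom algebra_simps)
      also have "\<dots> = (\<Sum>j<D. monom (coeff rem j) j) - Y"
        unfolding Y_def using bb by (simp add: sum_subtractf monom_sum sum_distrib_right)
      also have "\<dots> = rem - Y" using remsum by simp
      finally have "x - (\<Sum>i\<in>{..<D} \<times> (S \<times> E). ore_scal \<iota> ((\<lambda>(j,(s,f)). ce (j, s) f) i) ((\<lambda>(j,(s,f)). monom (f * s) j) i))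
          = om r (emb H) + Y" using rr(1) by simp
      also have "\<dots> \<in> K" by (rule R.subsp_add[OF sK K1 YK])
      finally show "\<exists>cf. x - (\<Sum>i\<in>{..<degree H} \<times> (S \<times> E). ore_scal \<iota> (cf i) ((\<lambda>(j,(s,f)). monom (f * s) j) i)) \<in> K"
        unfolding D_def by blast
    qed
  qed
  show ?thesis by (rule R.fd_intro[OF lP idK fK PK])
qed

end



context ore_f begin

lemma fmap_Psi:
  assumes c: "c \<in> CC" and e: "e \<in> DD"
  shows "fmap (Psi c e) = (\<lambda>(x, y). c x * e y)"
proof -
  have lc: "kspace.lin scA c" by (rule kalg.fd_lin[OF kalg_A c])
  have le: "kspace.lin smult e" by (rule kalg.fd_lin[OF kalg_P e])
  show ?thesis by (rule ext) (simp add: fmap_def Psi_omg[OF lc le] case_prod_beta)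
qed

lemma fmap_surj:
  assumes Tt: "Tt \<in> tensor_span CC DD"
  shows "\<exists>\<psi>\<in>RR. fmap \<psi> = Tt"
proof -
  interpret R: kalg "ore_scal \<iota>" om by (rule kalg_R)
  obtain n :: nat and c e where ce: "\<forall>i<n. c i \<in> CC \<and> e i \<in> DD" "Tt = (\<lambda>(x, y). \<Sum>i<n. c i x * e i y)"
    using Tt unfolding tensor_span_def by blast
  define \<psi> where "\<psi> = (\<lambda>x. \<Sum>i\<in>{..<n}. Psi (c i) (e i) x)"
  have "\<psi> \<in> RR" unfolding \<psi>_def by (rule R.fd_sum) (use ce(1) Psi_RR in auto)
  moreover have "fmap \<psi> = Tt"
  proof (rule ext)
    fix z
    have "fmap \<psi> z = (\<Sum>i<n. fmap (Psi (c i) (e i)) z)" by (simp add: fmap_def \<psi>_def)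
    also have "\<dots> = (\<Sum>i<n. c i (fst z) * e i (snd z))"
      by (rule sum.cong[OF refl]) (use ce(1) fmap_Psi in \<open>auto simp: case_prod_beta\<close>)
    finally show "fmap \<psi> z = Tt z" using ce(2) by (simp add: case_prod_beta)
  qed
  ultimately show ?thesis by blast
qed

lemma fmap_bij: "bij_betw fmap RR (tensor_span CC DD)"
  unfolding bij_betw_def
proof
  show "inj_on fmap RR" by (rule fmap_inj)
  show "fmap ` RR = tensor_span CC DD"
    using fmap_into fmap_surj by blast
qed

definition phi where
  "phi Tt = (\<lambda>(q, a'). inv_into RR fmap Tt (om (emb q) [:a':]))"

lemma phi_fmap: "\<psi> \<in> RR \<Longrightarrow> phi (fmap \<psi>) = (\<lambda>(q, a'). \<psi> (om (emb q) [:a':]))"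
  unfolding phi_def using inv_into_f_f[OF fmap_inj] by simp

lemma omg_trans: "omg (a * x) (y * p') = om (om [:a:] (omg x y)) (emb p')"
proof -
  have "om [:a:] (omg x y) = omg (a * x) y" by (rule poly_eqI) (simp add: om_const mult.assoc)
  then show ?thesis by (simp add: om_omg_emb)
qed

lemma delta_fmap_pt:
  assumes psi: "\<psi> \<in> RR"
  shows "delta_phi (*) (*) phi (fmap \<psi>) ((a, q), (a', p')) = \<psi> (om (omg a q) (omg a' p'))"
proof -
  interpret R: kalg "ore_scal \<iota>" om by (rule kalg_R)
  define \<psi>1 where "\<psi>1 = (\<lambda>r. \<psi> (om (om [:a:] r) (emb p')))"
  have p1: "\<psi>1 \<in> RR" unfolding \<psi>1_def by (rule R.fd_translate[OF psi])
  have "(\<lambda>(x, y). fmap \<psi> (a * x, y * p')) = fmap \<psi>1"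
    by (rule ext) (simp add: fmap_def \<psi>1_def omg_trans case_prod_beta)
  then have "delta_phi (*) (*) phi (fmap \<psi>) ((a, q), (a', p')) = \<psi>1 (om (emb q) [:a':])"
    unfolding delta_phi_def by (simp add: phi_fmap[OF p1])
  also have "\<dots> = \<psi> (om (omg a q) (omg a' p'))"
    unfolding \<psi>1_def by (simp add: omg_om om_assoc)
  finally show ?thesis .
qed

lemma delta_fmap:
  assumes psi: "\<psi> \<in> RR"
  shows "delta_phi (*) (*) phi (fmap \<psi>) = (\<lambda>(u, w). \<psi> (om (omg (fst u) (snd u)) (omg (fst w) (snd w))))"
  by (rule ext) (auto simp: delta_fmap_pt[OF psi] split: prod.splits)

lemma tensor_map_fmap:
  "tensor_map fmap fmap (\<lambda>(x, y). \<psi> (om x y)) = (\<lambda>(u, w). \<psi> (om (omg (fst u) (snd u)) (omg (fst w) (snd w))))"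
  unfolding tensor_map_def fmap_def by (simp add: case_prod_beta)

lemma fmap_add: "fmap (\<lambda>x. \<psi>1 x + \<psi>2 x) = (\<lambda>z. fmap \<psi>1 z + fmap \<psi>2 z)" by (simp add: fmap_def)
lemma fmap_scal: "fmap (\<lambda>x. c * \<psi> x) = (\<lambda>z. c * fmap \<psi> z)" by (simp add: fmap_def)

lemma tspan_pre: "Tt \<in> tensor_span CC DD \<Longrightarrow> \<exists>\<psi>\<in>RR. Tt = fmap \<psi>"
  using fmap_surj by metis

lemma cotw: "cotwisting CC DD (*) 1 (*) 1 phi"
proof -
  interpret R: kalg "ore_scal \<iota>" om by (rule kalg_R)
  have lin: "linear_on (tensor_span CC DD) phi"
    unfolding linear_on_def
  proof (intro conjI ballI allI)
    fix u v assume "u \<in> tensor_span CC DD" "v \<in> tensor_span CC DD"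
    then obtain \<psi>1 \<psi>2 where p: "\<psi>1 \<in> RR" "\<psi>2 \<in> RR" "u = fmap \<psi>1" "v = fmap \<psi>2" using tspan_pre by metis
    have s: "(\<lambda>x. \<psi>1 x + \<psi>2 x) \<in> RR" by (rule R.fd_add[OF p(1,2)])
    show "phi (\<lambda>z. u z + v z) = (\<lambda>z. phi u z + phi v z)"
      unfolding p(3,4) fmap_add[symmetric] phi_fmap[OF s] phi_fmap[OF p(1)] phi_fmap[OF p(2)]
      by (rule ext) (simp add: case_prod_beta)
  next
    fix u c assume "u \<in> tensor_span CC DD"
    then obtain \<psi>1 where p: "\<psi>1 \<in> RR" "u = fmap \<psi>1" using tspan_pre by metis
    have s: "(\<lambda>x. c * \<psi>1 x) \<in> RR" by (rule R.fd_scal[OF p(1)])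
    show "phi (\<lambda>z. c * u z) = (\<lambda>z. c * phi u z)"
      unfolding p(2) fmap_scal[symmetric] phi_fmap[OF s] phi_fmap[OF p(1)]
      by (rule ext) (simp add: case_prod_beta)
  qed
  have img: "phi ` tensor_span CC DD \<subseteq> tensor_span DD CC"
  proof
    fix y assume "y \<in> phi ` tensor_span CC DD"
    then obtain \<psi> where p: "\<psi> \<in> RR" "y = phi (fmap \<psi>)" using tspan_pre by blast
    obtain n :: nat and u v where uv: "\<forall>i<n. u i \<in> RR \<and> v i \<in> RR" "\<forall>x y. \<psi> (om x y) = (\<Sum>i<n. u i x * v i y)"
      using R.fd_finrank[OF p(1)] by blast
    have "y = (\<lambda>(q, a). \<Sum>i<n. (\<lambda>q. u i (emb q)) q * (\<lambda>a. v i [:a:]) a)"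
      unfolding p(2) phi_fmap[OF p(1)] by (simp add: uv(2))
    moreover have "\<forall>i<n. (\<lambda>q. u i (emb q)) \<in> DD \<and> (\<lambda>a. v i [:a:]) \<in> CC"
      using uv(1) pull_A pull_P by blast
    ultimately show "y \<in> tensor_span DD CC"
      by (intro tensor_span_intro[of n "\<lambda>i q. u i (emb q)" DD "\<lambda>i a. v i [:a:]"]) auto
  qed
  have main: "delta_phi (*) (*) phi Tt \<in> tensor_span (tensor_span CC DD) (tensor_span CC DD)
      \<and> (\<forall>u v w. delta_phi (*) (*) phi (\<lambda>z. delta_phi (*) (*) phi Tt (z, w)) (u, v)
               = delta_phi (*) (*) phi (\<lambda>z. delta_phi (*) (*) phi Tt (u, z)) (v, w))
      \<and> (\<forall>w. delta_phi (*) (*) phi Tt ((1, 1), w) = Tt w)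
      \<and> (\<forall>u. delta_phi (*) (*) phi Tt (u, (1, 1)) = Tt u)" if Tt: "Tt \<in> tensor_span CC DD" for Tt
  proof -
    obtain \<psi> where p: "\<psi> \<in> RR" "Tt = fmap \<psi>" using tspan_pre[OF Tt] by blast
    note D = delta_fmap[OF p(1)]
    have part1: "delta_phi (*) (*) phi Tt \<in> tensor_span (tensor_span CC DD) (tensor_span CC DD)"
    proof -
      obtain n :: nat and u v where uv: "\<forall>i<n. u i \<in> RR \<and> v i \<in> RR" "\<forall>x y. \<psi> (om x y) = (\<Sum>i<n. u i x * v i y)"
        using R.fd_finrank[OF p(1)] by blast
      have "delta_phi (*) (*) phi Tt = (\<lambda>(x, y). \<Sum>i<n. fmap (u i) x * fmap (v i) y)"
        unfolding p(2) D by (simp add: uv(2) fmap_def case_prod_beta)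
      moreover have "\<forall>i<n. fmap (u i) \<in> tensor_span CC DD \<and> fmap (v i) \<in> tensor_span CC DD"
        using uv(1) fmap_into by blast
      ultimately show ?thesis
        by (intro tensor_span_intro[of n "\<lambda>i. fmap (u i)" _ "\<lambda>i. fmap (v i)"]) auto
    qed
    have part2: "delta_phi (*) (*) phi (\<lambda>z. delta_phi (*) (*) phi Tt (z, w)) (u, v)
               = delta_phi (*) (*) phi (\<lambda>z. delta_phi (*) (*) phi Tt (u, z)) (v, w)" for u v w
    proof -
      define \<psi>a where "\<psi>a = (\<lambda>r. \<psi> (om (om [:1:] r) (omg (fst w) (snd w))))"
      define \<psi>b where "\<psi>b = (\<lambda>r. \<psi> (om (om (omg (fst u) (snd u)) r) [:1:]))"
      have pa: "\<psi>a \<in> RR" unfolding \<psi>a_def by (rule R.fd_translate[OF p(1)])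
      have pb: "\<psi>b \<in> RR" unfolding \<psi>b_def by (rule R.fd_translate[OF p(1)])
      have ea: "(\<lambda>z. delta_phi (*) (*) phi Tt (z, w)) = fmap \<psi>a"
        unfolding p(2) D by (rule ext) (simp add: fmap_def \<psi>a_def om_1l)
      have eb: "(\<lambda>z. delta_phi (*) (*) phi Tt (u, z)) = fmap \<psi>b"
        unfolding p(2) D by (rule ext) (simp add: fmap_def \<psi>b_def om_1r)
      show ?thesis unfolding ea eb delta_fmap[OF pa] delta_fmap[OF pb]
        by (simp add: \<psi>a_def \<psi>b_def om_1l om_1r om_assoc)
    qed
    have part3: "delta_phi (*) (*) phi Tt ((1, 1), w) = Tt w" for w
      unfolding p(2) D by (simp add: omg_11 om_1l fmap_def case_prod_beta)
    have part4: "delta_phi (*) (*) phi Tt (u, (1, 1)) = Tt u" for u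
      unfolding p(2) D by (simp add: omg_11 om_1r fmap_def case_prod_beta)
    show ?thesis using part1 part2 part3 part4 by blast
  qed
  show ?thesis unfolding cotwisting_def using lin img main by blast
qed

lemma iso: "coalg_iso_twisted RR om [:1:] CC DD (*) 1 (*) 1 phi fmap"
proof -
  have lin: "linear_on RR fmap" unfolding linear_on_def by (simp add: fmap_def)
  have cou: "\<forall>\<psi>\<in>RR. fmap \<psi> (1, 1) = \<psi> [:1:]" by (simp add: fmap_def omg_11)
  have com: "\<forall>\<psi>\<in>RR. delta_phi (*) (*) phi (fmap \<psi>) = tensor_map fmap fmap (\<lambda>(x, y). \<psi> (om x y))"
    by (simp add: delta_fmap tensor_map_fmap)
  show ?thesis unfolding coalg_iso_twisted_def using fmap_bij lin cou com by blast
qed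

end

theorem corollary4p3:
  fixes \<iota> :: "'k::field \<Rightarrow> 'a::ring_1" and \<theta> \<delta> :: "'a \<Rightarrow> 'a" and d :: nat
  assumes alg: "k_algebra \<iota>"
    and theta_lin: "k_linear \<iota> \<theta>" and theta_bij: "bij \<theta>"
    and theta_mult: "\<forall>a b. \<theta> (a * b) = \<theta> a * \<theta> b" and theta_one: "\<theta> 1 = 1"
    and delta_lin: "k_linear \<iota> \<delta>"
    and delta_der: "\<forall>a b. \<delta> (a * b) = \<theta> a * \<delta> b + \<delta> a * b"
    and d_pos: "0 < d" and theta_d: "\<theta> ^^ d = id"
    and words_zero: "\<forall>i<d. \<forall>a. (\<Sum>w\<in>words i d. word_op \<theta> \<delta> w a) = 0"
    and fin_left: "fin_gen_left {a. \<theta> a = a \<and> \<delta> a = 0}"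
    and fin_right: "fin_gen_right {a. \<theta> a = a \<and> \<delta> a = 0}"
  shows "\<exists>(\<phi> :: ('a \<times> 'k poly \<Rightarrow> 'k) \<Rightarrow> ('k poly \<times> 'a \<Rightarrow> 'k))
            (f :: ('a poly \<Rightarrow> 'k) \<Rightarrow> ('a \<times> 'k poly \<Rightarrow> 'k)).
     cotwisting (finite_dual (*) (\<lambda>c a. \<iota> c * a)) (finite_dual (*) smult) (*) 1 (*) 1 \<phi>
   \<and> coalg_iso_twisted (finite_dual (ore_mult \<theta> \<delta>) (ore_scal \<iota>)) (ore_mult \<theta> \<delta>) [:1:]
        (finite_dual (*) (\<lambda>c a. \<iota> c * a)) (finite_dual (*) smult) (*) 1 (*) 1 \<phi> f"
proof -
  interpret O: ore_f \<iota> \<theta> \<delta> d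
    by (unfold_locales) (use alg theta_lin theta_mult theta_one delta_lin delta_der d_pos theta_d words_zero fin_left in auto)
  show ?thesis using O.cotw O.iso by blast
qed


end
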